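(* Let $\mathfrak{A}$ be an atomic weakly associative relation algebra and let $\mathfrak{B}=\langle B,T_\kappa,E_{\kappa\lambda}\rangle_{\kappa,\lambda<3}$ be its suitable structure. Then $\mathfrak{Cm}\,\mathfrak{B}\cong\mathfrak{Rc}\,\mathfrak{B}$, via the map $R$ defined for $X\subseteq B$ by $R(X)=\bigcup_{t\in X}R_t$.
   Context: WA: algebras $\langle A,+,\overline{\phantom{x}},;,\breve{\phantom{x}},1'\rangle$ with $x\cdot y=\overline{\overline{x}+\overline{y}}$, $0'=\overline{1'}$, $1=1'+0'$, $0=\overline{1}$, satisfying for all $x,y,z$: $x+y=y+x$; $x+(y+z)=(x+y)+z$; $\overline{\overline{x}+\overline{y}}+\overline{\overline{x}+y}=x$; $((x\cdot 1');1);1=(x\cdot1');1$; $(x+y);z=x;z+y;z$; $x;1'=x$; $\breve{\breve{x}}=x$; $\breve{(x+y)}=\breve{x}+\breve{y}$; $\breve{(x;y)}=\breve{y};\breve{x}$; $\breve{x};\overline{x;y}+\overline{y}=\overline{y}$. $\mathrm{At}(\mathfrak{A})$ = set of atoms. Suitable structure: $B=\{s\in{}^3\mathrm{At}(\mathfrak{A}): s_2;s_0\ge s_1\}$; $T_\kappa=\{\langle s,t\rangle\in B\times B:s_\kappa=t_\kappa\}$; $E_{\kappa\kappa}=B$; for distinct $\kappa,\lambda$ with third index $\mu$, $E_{\kappa\lambda}=\{s\in B:s_\mu\le1'\}$. Complex algebra: $\mathfrak{Cm}\,\mathfrak{B}=\langle\mathcal{P}(B),\cup,\cap,B\setminus\cdot,\emptyset,B,T_\kappa^*,E_{\kappa\lambda}\rangle_{\kappa,\lambda<3}$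 with $T_\kappa^*(X)=\{y\in B:\exists x\in X\ \langle y,x\rangle\in T_\kappa\}$. Trails: a $\mathfrak{B}$-trail is $p=\langle t_0,\kappa_0,\dots,t_n,\kappa_n\rangle$, $n\in\omega$, $t_i\in B$, $\kappa_i<3$, with $t_i\ne t_{i+1}$ and $\langle t_i,t_{i+1}\rangle\in T_{\kappa_i}$ for $i<n$; it ends at $t_n$. $\mathrm{Tr}(\mathfrak{B})$ = set of trails; $p\lambda=\langle t_0,\kappa_0,\dots,t_n,\lambda\rangle$. $\approx$ is the smallest equivalence relation on $\mathrm{Tr}(\mathfrak{B})$ with (for trails of the displayed forms): (a) $\langle t_0,\kappa_0,\dots,t_i,\lambda,s,\lambda,t_i,\kappa_i,\dots,t_n,\kappa_n\rangle\approx\langle t_0,\kappa_0,\dots,t_i,\kappa_i,\dots,t_n,\kappa_n\rangle$; (b) $\langle t_0,\kappa_0,\dots,t_n,\lambda,s,\nu\rangle\approx\langle t_0,\kappa_0,\dots,t_n,\nu\rangle$ if $\lambda\ne\nu$; (c) $\langle t_0,\kappa_0,\dots,t_n,\lambda\rangle\approx\langle t_0,\kappa_0,\dots,t_n,\kappa_n\rangle$ if $t_n\in E_{\lambda\kappa_n}$. $p^{\mathfrak{B}}$ = $\approx$-class of $p$; $U(\mathfrak{B})=\{p^{\mathfrak{B}}:p\in\mathrm{Tr}(\mathfrak{B})\}$; $R_t=\{\langle(p0)^{\mathfrak{B}},(p1)^{\mathfrak{B}},(p2)^{\mathfrak{B}}\rangle:p\in\mathrm{Tr}(\mathfrak{B})\text{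 ends at }t\}$; $V(\mathfrak{B})=\bigcup_{t\in B}R_t$. Set algebras: the full 3-dimensional cylindric set algebra on $U$ is $\langle\mathcal{P}({}^3U),\cup,{}^3U\setminus\cdot,C_\kappa,D_{\kappa\lambda}\rangle_{\kappa,\lambda<3}$ with $C_\kappa X=\{v\in{}^3U:\exists u\in X\ \forall\lambda\ne\kappa\ u_\lambda=v_\lambda\}$ and $D_{\kappa\lambda}=\{v\in{}^3U:v_\kappa=v_\lambda\}$. Let $\mathfrak{C}$ be the subalgebra of the full cylindric set algebra on $U(\mathfrak{B})$ completely generated by $\{R_t:t\in B\}$ (closed under arbitrary unions). $\mathfrak{Rc}\,\mathfrak{B}$ is the relativization of $\mathfrak{C}$ to $V=V(\mathfrak{B})$: universe $\{X\in C:X\subseteq V\}$, operations $\cup$, $V\setminus\cdot$, $C^{[V]}_\kappa X=V\cap C_\kappa X$, constants $D^{[V]}_{\kappa\lambda}=V\cap D_{\kappa\lambda}$. *)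

theory Defs
  imports Main
begin

record 'a ra_sig =
  wcar   :: "'a set"
  wplus  :: "'a \<Rightarrow> 'a \<Rightarrow> 'a"
  wcompl :: "'a \<Rightarrow> 'a"
  wcomp  :: "'a \<Rightarrow> 'a \<Rightarrow> 'a"
  wconv  :: "'a \<Rightarrow> 'a"
  wid    :: 'a

definition wmeet :: "'a ra_sig \<Rightarrow> 'a \<Rightarrow> 'a \<Rightarrow> 'a" where
  "wmeet A x y = wcompl A (wplus A (wcompl A x) (wcompl A y))"

definition wdiv :: "'a ra_sig \<Rightarrow> 'a" where
  "wdiv A = wcompl A (wid A)"

definition wone :: "'a ra_sig \<Rightarrow> 'a" where
  "wone A = wplus A (wid A) (wdiv A)"

definition wzero :: "'a ra_sig \<Rightarrow> 'a" where
  "wzero A = wcompl A (wone A)"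

definition wle :: "'a ra_sig \<Rightarrow> 'a \<Rightarrow> 'a \<Rightarrow> bool" where
  "wle A x y \<longleftrightarrow> wplus A x y = y"

definition WA :: "'a ra_sig \<Rightarrow> bool" where
  "WA A \<longleftrightarrow>
     wid A \<in> wcar A \<and>
     (\<forall>x\<in>wcar A. \<forall>y\<in>wcar A. wplus A x y \<in> wcar A \<and> wcomp A x y \<in> wcar A) \<and>
     (\<forall>x\<in>wcar A. wcompl A x \<in> wcar A \<and> wconv A x \<in> wcar A) \<and>
     (\<forall>x\<in>wcar A. \<forall>y\<in>wcar A. \<forall>z\<in>wcar A.
        wplus A x y = wplus A y x \<and>
        wplus A x (wplus A y z) = wplus A (wplus A x y) z \<and>
        wplus A (wcompl A (wplus A (wcompl A x) (wcompl A y)))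
                (wcompl A (wplus A (wcompl A x) y)) = x \<and>
        wcomp A (wcomp A (wmeet A x (wid A)) (wone A)) (wone A)
          = wcomp A (wmeet A x (wid A)) (wone A) \<and>
        wcomp A (wplus A x y) z = wplus A (wcomp A x z) (wcomp A y z) \<and>
        wcomp A x (wid A) = x \<and>
        wconv A (wconv A x) = x \<and>
        wconv A (wplus A x y) = wplus A (wconv A x) (wconv A y) \<and>
        wconv A (wcomp A x y) = wcomp A (wconv A y) (wconv A x) \<and>
        wplus A (wcomp A (wconv A x) (wcompl A (wcomp A x y))) (wcompl A y)
          = wcompl A y)"

definition At :: "'a ra_sig \<Rightarrow> 'a set" where
  "At A = {a \<in> wcar A. a \<noteq> wzero A \<and>
             (\<forall>y\<in>wcar A. wle A y a \<longrightarrow> y = wzero A \<or> y = a)}"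

definition atomic :: "'a ra_sig \<Rightarrow> bool" where
  "atomic A \<longleftrightarrow> (\<forall>x\<in>wcar A. x \<noteq> wzero A \<longrightarrow> (\<exists>a\<in>At A. wle A a x))"

text \<open>A 3-sequence \<open>s \<in> ^3X\<close> is represented as a triple; \<open>tr s i\<close> is \<open>s_i\<close>.\<close>

definition tr :: "'b \<times> 'b \<times> 'b \<Rightarrow> nat \<Rightarrow> 'b" where
  "tr s i = (if i = 0 then fst s else if i = 1 then fst (snd s) else snd (snd s))"

type_synonym 'a tri = "'a \<times> 'a \<times> 'a"

definition SB :: "'a ra_sig \<Rightarrow> 'a tri set" where
  "SB A = {s. tr s 0 \<in> At A \<and> tr s 1 \<in> At A \<and> tr s 2 \<in> At A \<and>
              wle A (tr s 1) (wcomp A (tr s 2) (tr s 0))}"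

definition ST :: "'a ra_sig \<Rightarrow> nat \<Rightarrow> ('a tri \<times> 'a tri) set" where
  "ST A k = {(s, t). s \<in> SB A \<and> t \<in> SB A \<and> tr s k = tr t k}"

text \<open>For distinct \<open>k, l < 3\<close> the third index is \<open>3 - k - l\<close>.\<close>
definition SE :: "'a ra_sig \<Rightarrow> nat \<Rightarrow> nat \<Rightarrow> 'a tri set" where
  "SE A k l = (if k = l then SB A else {s \<in> SB A. wle A (tr s (3 - k - l)) (wid A)})"

definition Tstar :: "'a ra_sig \<Rightarrow> nat \<Rightarrow> 'a tri set \<Rightarrow> 'a tri set" where
  "Tstar A k X = {y \<in> SB A. \<exists>x\<in>X. (y, x) \<in> ST A k}"

record 'x cyl_alg =
  cuniv :: "'x set"
  cjoin :: "'x \<Rightarrow> 'x \<Rightarrow> 'x"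
  cmeet :: "'x \<Rightarrow> 'x \<Rightarrow> 'x"
  ccompl :: "'x \<Rightarrow> 'x"
  cbot :: 'x
  ctop :: 'x
  ccyl :: "nat \<Rightarrow> 'x \<Rightarrow> 'x"
  cdiag :: "nat \<Rightarrow> nat \<Rightarrow> 'x"

definition cyl_iso :: "('x \<Rightarrow> 'y) \<Rightarrow> 'x cyl_alg \<Rightarrow> 'y cyl_alg \<Rightarrow> bool" where
  "cyl_iso h A A' \<longleftrightarrow>
     bij_betw h (cuniv A) (cuniv A') \<and>
     (\<forall>x\<in>cuniv A. \<forall>y\<in>cuniv A.
        h (cjoin A x y) = cjoin A' (h x) (h y) \<and>
        h (cmeet A x y) = cmeet A' (h x) (h y)) \<and>
     (\<forall>x\<in>cuniv A. h (ccompl A x) = ccompl A' (h x)) \<and>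
     h (cbot A) = cbot A' \<and> h (ctop A) = ctop A' \<and>
     (\<forall>k<3. \<forall>x\<in>cuniv A. h (ccyl A k x) = ccyl A' k (h x)) \<and>
     (\<forall>k<3. \<forall>l<3. h (cdiag A k l) = cdiag A' k l)"

definition Cm :: "'a ra_sig \<Rightarrow> 'a tri set cyl_alg" where
  "Cm A = \<lparr> cuniv = Pow (SB A), cjoin = (\<union>), cmeet = (\<inter>),
            ccompl = (\<lambda>X. SB A - X), cbot = {}, ctop = SB A,
            ccyl = Tstar A, cdiag = SE A \<rparr>"

type_synonym 'a trail = "('a tri \<times> nat) list"

text \<open>A trail \<open>\<langle>t_0,k_0,...,t_n,k_n\<rangle>\<close> is the nonempty list \<open>[(t_0,k_0),...,(t_n,k_n)]\<close>.\<close>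
definition is_trail :: "'a ra_sig \<Rightarrow> 'a trail \<Rightarrow> bool" where
  "is_trail A p \<longleftrightarrow> p \<noteq> [] \<and>
     (\<forall>i<length p. fst (p ! i) \<in> SB A \<and> snd (p ! i) < 3) \<and>
     (\<forall>i. Suc i < length p \<longrightarrow>
        fst (p ! i) \<noteq> fst (p ! Suc i) \<and> (fst (p ! i), fst (p ! Suc i)) \<in> ST A (snd (p ! i)))"

definition Tr :: "'a ra_sig \<Rightarrow> 'a trail set" where
  "Tr A = {p. is_trail A p}"

text \<open>The generating pairs (a), (b), (c) of the relation \<open>\<approx>\<close> (between trails).\<close>
inductive trail_step :: "'a ra_sig \<Rightarrow> 'a trail \<Rightarrow> 'a trail \<Rightarrow> bool" for A where
  ruleA: "\<lbrakk> is_trail A (xs @ [(t, l), (s, l), (t, k)] @ ys); is_trail A (xs @ [(t, k)] @ ys) \<rbrakk>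
          \<Longrightarrow> trail_step A (xs @ [(t, l), (s, l), (t, k)] @ ys) (xs @ [(t, k)] @ ys)"
| ruleB: "\<lbrakk> is_trail A (xs @ [(t, l), (s, v)]); is_trail A (xs @ [(t, v)]); l \<noteq> v \<rbrakk>
          \<Longrightarrow> trail_step A (xs @ [(t, l), (s, v)]) (xs @ [(t, v)])"
| ruleC: "\<lbrakk> is_trail A (xs @ [(t, l)]); is_trail A (xs @ [(t, k)]); t \<in> SE A l k \<rbrakk>
          \<Longrightarrow> trail_step A (xs @ [(t, l)]) (xs @ [(t, k)])"

inductive trail_eq :: "'a ra_sig \<Rightarrow> 'a trail \<Rightarrow> 'a trail \<Rightarrow> bool" for A where
  te_refl: "is_trail A p \<Longrightarrow> trail_eq A p p"
| te_step: "trail_step A p q \<Longrightarrow> trail_eq A p q"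
| te_sym: "trail_eq A p q \<Longrightarrow> trail_eq A q p"
| te_trans: "trail_eq A p q \<Longrightarrow> trail_eq A q r \<Longrightarrow> trail_eq A p r"

definition cls :: "'a ra_sig \<Rightarrow> 'a trail \<Rightarrow> 'a trail set" where
  "cls A p = {q. trail_eq A p q}"

definition relab :: "'a trail \<Rightarrow> nat \<Rightarrow> 'a trail" where
  "relab p l = butlast p @ [(fst (last p), l)]"

definition UB :: "'a ra_sig \<Rightarrow> 'a trail set set" where
  "UB A = cls A ` Tr A"

definition Rt :: "'a ra_sig \<Rightarrow> 'a tri \<Rightarrow> 'a trail set tri set" where
  "Rt A t = {(cls A (relab p 0), cls A (relab p 1), cls A (relab p 2)) | p.
               is_trail A p \<and> fst (last p) = t}"

definition VB :: "'a ra_sig \<Rightarrow> 'a trail set tri set" where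
  "VB A = (\<Union>t\<in>SB A. Rt A t)"

definition U3 :: "'a ra_sig \<Rightarrow> 'a trail set tri set" where
  "U3 A = UB A \<times> UB A \<times> UB A"

definition cylU :: "'a ra_sig \<Rightarrow> nat \<Rightarrow> 'a trail set tri set \<Rightarrow> 'a trail set tri set" where
  "cylU A k X = {v \<in> U3 A. \<exists>u\<in>X. \<forall>l<3. l \<noteq> k \<longrightarrow> tr u l = tr v l}"

definition diagU :: "'a ra_sig \<Rightarrow> nat \<Rightarrow> nat \<Rightarrow> 'a trail set tri set" where
  "diagU A k l = {v \<in> U3 A. tr v k = tr v l}"

inductive_set Cgen :: "'a ra_sig \<Rightarrow> 'a trail set tri set set" for A where
  gen: "t \<in> SB A \<Longrightarrow> Rt A t \<in> Cgen A"
| union: "(\<And>X. X \<in> S \<Longrightarrow> X \<in> Cgen A) \<Longrightarrow> \<Union>S \<in> Cgen A"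
| compl: "X \<in> Cgen A \<Longrightarrow> U3 A - X \<in> Cgen A"
| cyl: "X \<in> Cgen A \<Longrightarrow> k < 3 \<Longrightarrow> cylU A k X \<in> Cgen A"
| diag: "k < 3 \<Longrightarrow> l < 3 \<Longrightarrow> diagU A k l \<in> Cgen A"

definition Rc :: "'a ra_sig \<Rightarrow> 'a trail set tri set cyl_alg" where
  "Rc A = \<lparr> cuniv = {X \<in> Cgen A. X \<subseteq> VB A}, cjoin = (\<union>), cmeet = (\<inter>),
            ccompl = (\<lambda>X. VB A - X), cbot = {}, ctop = VB A,
            ccyl = (\<lambda>k X. VB A \<inter> cylU A k X), cdiag = (\<lambda>k l. VB A \<inter> diagU A k l) \<rparr>"

definition Rmap :: "'a ra_sig \<Rightarrow> 'a tri set \<Rightarrow> 'a trail set tri set" where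
  "Rmap A X = (\<Union>t\<in>X. Rt A t)"

end

theory Submission
  imports Defs
begin

locale hba =
  fixes K :: "'a set" and p :: "'a\<Rightarrow>'a\<Rightarrow>'a" and n :: "'a \<Rightarrow> 'a" and c0 :: 'a
  assumes cl: "x\<in>K \<Longrightarrow> y\<in>K \<Longrightarrow> p x y \<in> K"
  and ncl: "x\<in>K \<Longrightarrow> n x \<in> K"
  and c0: "c0 \<in> K"
  and comm: "x\<in>K \<Longrightarrow> y\<in>K \<Longrightarrow> p x y = p y x"
  and assoc: "x\<in>K \<Longrightarrow> y\<in>K \<Longrightarrow> z\<in>K \<Longrightarrow> p x (p y z) = p (p x y) z"
  and hunt: "x\<in>K \<Longrightarrow> y\<in>K \<Longrightarrow> p (n (p (n x) (n y))) (n (p (n x) y)) = x"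
begin

definition top where "top = p c0 (n c0)"
definition bot where "bot = n top"
definition le where "le x y \<longleftrightarrow> p x y = y"
definition meet where "meet x y = n (p (n x) (n y))"

lemma Q: "a\<in>K \<Longrightarrow> b\<in>K \<Longrightarrow> p (n (p (n a) b)) b = p a (n (p (n b) (n (n a))))"
proof -
  assume a: "a\<in>K" "b\<in>K"
  have 1: "b = p (n (p (n b) (n (n a)))) (n (p (n b) (n a)))" using hunt[of b "n a"] a ncl by simp
  have 2: "a = p (n (p (n a) (n b))) (n (p (n a) b))" using hunt[of a b] a by simp
  have "p (n (p (n a) b)) b = p (n (p (n a) b)) (p (n (p (n b) (n (n a)))) (n (p (n b) (n a))))"
    using 1 by simp
  also have "\<dots> = p (p (n (p (n a) (n b))) (n (p (n a) b))) (n (p (n b) (n (n a))))"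
    using a ncl cl comm assoc by (smt (verit))
  also have "\<dots> = p a (n (p (n b) (n (n a))))" using 2 by simp
  finally show ?thesis .
qed
lemma f3: "a\<in>K \<Longrightarrow> b\<in>K \<Longrightarrow> p (n (p a (n b))) (n (p (n b) (n a))) = b"
  using hunt[of b a] comm ncl cl by metis
lemma f5: "a\<in>K \<Longrightarrow> b\<in>K \<Longrightarrow> p (n (p a (n b))) (n (p (n a) (n b))) = b"
  using hunt[of b a] comm ncl cl by metis
lemma f4: "a\<in>K \<Longrightarrow> b\<in>K \<Longrightarrow> c\<in>K \<Longrightarrow> p a (p (n (p (n b) a)) c) = p b (p (n (p (n a) (n (n b)))) c)"
proof -
  assume k: "a\<in>K" "b\<in>K" "c\<in>K"
  have "p a (n (p (n b) a)) = p b (n (p (n a) (n (n b))))"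
    using Q[of b a] k comm ncl cl by metis
  then have "p (p a (n (p (n b) a))) c = p (p b (n (p (n a) (n (n b))))) c" by simp
  then show ?thesis using k assoc ncl cl by metis
qed
lemma l1: "a\<in>K \<Longrightarrow> b\<in>K \<Longrightarrow> p a (n a) = p b (n b)"
proof -
  assume k: "a\<in>K" "b\<in>K"
  have S1: "p a (p (n (p (n (n b)) (n (n a)))) (n (p (n b) (n (n a))))) = p (n b) b"
  proof -
    have "p a (p (n (p (n (n b)) (n (n a)))) (n (p (n b) (n (n a)))))
        = p (n b) (p (n (p (n a) (n b))) (n (p (n b) (n (n a)))))"
      using f4[of "n b" a "n (p (n b) (n (n a)))"] k ncl cl by simp
    also have "p (n (p (n a) (n b))) (n (p (n b) (n (n a)))) = b"
      using f3[of "n a" b] k ncl by simp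
    finally show ?thesis by simp
  qed
  have S3: "p (n (p (n (n b)) (n (n a)))) (n (p (n b) (n (n a)))) = n a"
    using f5[of "n b" "n a"] k ncl comm cl by metis
  show ?thesis using S1 S3 k comm ncl by metis
qed

lemma topK: "top \<in> K" unfolding top_def using c0 cl ncl by simp
lemma botK: "bot \<in> K" unfolding bot_def using topK ncl by simp
lemma top_eq: "a\<in>K \<Longrightarrow> p a (n a) = top" unfolding top_def using l1 c0 by blast

lemma dneg: "a\<in>K \<Longrightarrow> n (n a) = a"
proof -
  assume k: "a\<in>K"
  have f2: "p (n (p (n a) (n (n (n a))))) bot = a"
    using hunt[of a "n (n a)"] k ncl top_eq[of "n a"] unfolding bot_def by simp
  have f3': "n b = p bot (n (p (n (n b)) b))" if b: "b\<in>K" for b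
  proof -
    have "p (n (p (n (n b)) (n b))) (n (p (n (n b)) b)) = n b" using hunt[of "n b" b] b ncl by simp
    moreover have "p (n (n b)) (n b) = top" using top_eq[of "n b"] comm[of "n b" "n (n b)"] b ncl by simp
    ultimately show ?thesis unfolding bot_def by simp
  qed
  have f3'': "n (n a) = p bot (n (p (n (n (n a))) (n a)))" using f3'[of "n a"] k ncl by simp
  have c: "p (n (n (n a))) (n a) = p (n a) (n (n (n a)))" using comm k ncl by simp
  have "n (n a) = p bot (n (p (n a) (n (n (n a)))))" using f3'' c by simp
  also have "\<dots> = p (n (p (n a) (n (n (n a))))) bot" using comm botK k ncl cl by simp
  finally show ?thesis using f2 by simp
qed

lemma top_n: "a\<in>K \<Longrightarrow> p (n a) a = top" using top_eq comm ncl by metis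

lemma Kfact: "b\<in>K \<Longrightarrow> c\<in>K \<Longrightarrow> p top (n (p b c)) = p (p b (n c)) (n b)"
proof -
  assume k: "b\<in>K" and that: "c\<in>K"
  have h: "p (n (p b (n c))) (n (p b c)) = n b"
    using hunt[of "n b" c] k that ncl dneg by simp
  have "p (p b (n c)) (n b) = p (p b (n c)) (p (n (p b (n c))) (n (p b c)))" using h by simp
  also have "\<dots> = p (p (p b (n c)) (n (p b (n c)))) (n (p b c))"
    using assoc k that ncl cl by simp
  also have "\<dots> = p top (n (p b c))" using top_eq k that ncl cl by simp
  finally show ?thesis by simp
qed

lemma T1: "b\<in>K \<Longrightarrow> p b top = p top bot"
proof -
  assume k: "b\<in>K"
  have "p top (n (p b (n b))) = p (p b (n (n b))) (n b)" using Kfact[of b "n b"] k ncl by simp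
  also have "\<dots> = p b top" using dneg k assoc ncl cl top_eq by (metis)
  finally show ?thesis using top_eq k unfolding bot_def by simp
qed

lemma top_abs: "b\<in>K \<Longrightarrow> p b top = top"
proof -
  assume k: "b\<in>K"
  have "p bot top = top" using top_eq[OF botK] dneg topK unfolding bot_def by simp
  then have "p top bot = top" using T1[OF botK] by simp
  then show ?thesis using T1 k by simp
qed

lemma bot_bot: "p bot bot = bot"
proof -
  have h: "p (n (p (n bot) (n bot))) (n (p (n bot) bot)) = bot" using hunt[of bot bot] botK by simp
  have nb: "n bot = top" unfolding bot_def using dneg topK by simp
  have tt: "p top top = top" using top_abs topK by simp
  have tb: "p top bot = top" using top_abs botK comm topK by metis
  show ?thesis using h unfolding nb tt tb by (simp add: bot_def)
qed

lemma join_bot: "x\<in>K \<Longrightarrow> p x bot = x"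
proof -
  assume k: "x\<in>K"
  have "p (n (p (n x) (n top))) (n (p (n x) top)) = x" using hunt[of x "top"] k topK by simp
  then have e0: "p (n (p (n x) bot)) bot = x" using top_abs ncl k unfolding bot_def by simp
  then have e: "p bot (n (p (n x) bot)) = x" using comm botK ncl cl k by metis
  define Y where "Y = n (p (n x) bot)"
  have Y: "Y \<in> K" unfolding Y_def using k ncl cl botK by simp
  have "p x bot = p (p bot Y) bot" using e Y_def by simp
  also have "\<dots> = p bot (p Y bot)" using assoc[of bot Y bot] Y botK by simp
  also have "\<dots> = p bot (p bot Y)" using comm[of Y bot] Y botK by simp
  also have "\<dots> = p (p bot bot) Y" using assoc[of bot bot Y] Y botK by simp
  also have "\<dots> = x" using bot_bot e Y_def by simp
  finally show ?thesis .
qed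

lemma idem: "x\<in>K \<Longrightarrow> p x x = x"
proof -
  have h: "y\<in>K \<Longrightarrow> n (p (n y) (n y)) = y" for y
  proof -
    assume k: "y\<in>K"
    have "p (n (p (n y) (n y))) (n (p (n y) y)) = y" using hunt k by simp
    then show ?thesis using top_n k join_bot ncl cl unfolding bot_def by simp
  qed
  assume k: "x\<in>K"
  have "n (p x x) = n x" using h[of "n x"] dneg k ncl by simp
  then have "n (n (p x x)) = n (n x)" by simp
  then show ?thesis using dneg k cl by simp
qed

lemma le_refl: "x\<in>K \<Longrightarrow> le x x" unfolding le_def using idem .
lemma le_antisym: "x\<in>K \<Longrightarrow> y\<in>K \<Longrightarrow> le x y \<Longrightarrow> le y x \<Longrightarrow> x = y" unfolding le_def using comm by metis
lemma le_trans: "x\<in>K \<Longrightarrow> y\<in>K \<Longrightarrow> z\<in>K \<Longrightarrow> le x y \<Longrightarrow> le y z \<Longrightarrow> le x z" unfolding le_def using assoc by metis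
lemma le_join1: "x\<in>K \<Longrightarrow> y\<in>K \<Longrightarrow> le x (p x y)" unfolding le_def using assoc idem by metis
lemma le_join2: "x\<in>K \<Longrightarrow> y\<in>K \<Longrightarrow> le y (p x y)" unfolding le_def using assoc idem comm cl by metis
lemma join_lub: "x\<in>K \<Longrightarrow> y\<in>K \<Longrightarrow> z\<in>K \<Longrightarrow> le x z \<Longrightarrow> le y z \<Longrightarrow> le (p x y) z" unfolding le_def using assoc by metis
lemma bot_le: "x\<in>K \<Longrightarrow> le bot x" unfolding le_def using join_bot comm botK by metis
lemma le_top: "x\<in>K \<Longrightarrow> le x top" unfolding le_def using top_abs .
lemma antitone: "x\<in>K \<Longrightarrow> y\<in>K \<Longrightarrow> le x y \<Longrightarrow> le (n y) (n x)"
proof -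
  assume k: "x\<in>K" "y\<in>K" "le x y"
  have "p (n (p x (n y))) (n (p x y)) = n x" using hunt[of "n x" y] k dneg ncl by simp
  then have e: "p (n (p x (n y))) (n y) = n x" using k unfolding le_def by simp
  show ?thesis unfolding le_def
    using e[symmetric] assoc idem comm k ncl cl by metis
qed
lemma antitone_iff: "x\<in>K \<Longrightarrow> y\<in>K \<Longrightarrow> le (n y) (n x) \<longleftrightarrow> le x y"
  using antitone dneg ncl by metis
lemma meetK: "x\<in>K \<Longrightarrow> y\<in>K \<Longrightarrow> meet x y \<in> K" unfolding meet_def using cl ncl by simp
lemma meet_comm: "x\<in>K \<Longrightarrow> y\<in>K \<Longrightarrow> meet x y = meet y x" unfolding meet_def using comm ncl by metis
lemma meet_le1: "x\<in>K \<Longrightarrow> y\<in>K \<Longrightarrow> le (meet x y) x"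
  unfolding meet_def using antitone[of "n x" "p (n x) (n y)"] le_join1 dneg ncl cl by metis
lemma meet_le2: "x\<in>K \<Longrightarrow> y\<in>K \<Longrightarrow> le (meet x y) y"
  using meet_le1 meet_comm by metis
lemma meet_glb: "x\<in>K \<Longrightarrow> y\<in>K \<Longrightarrow> z\<in>K \<Longrightarrow> le z x \<Longrightarrow> le z y \<Longrightarrow> le z (meet x y)"
proof -
  assume k: "x\<in>K" "y\<in>K" "z\<in>K" "le z x" "le z y"
  have "le (p (n x) (n y)) (n z)" using join_lub antitone k ncl by simp
  then have "le (n (n z)) (n (p (n x) (n y)))" using antitone k ncl cl by simp
  then show ?thesis unfolding meet_def using dneg k by simp
qed
lemma meet_compl: "x\<in>K \<Longrightarrow> meet x (n x) = bot"
  unfolding meet_def bot_def using dneg top_n ncl by simp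
lemma le_bot: "x\<in>K \<Longrightarrow> le x bot \<Longrightarrow> x = bot" using bot_le le_antisym botK by blast
lemma meet_zero_iff: "x\<in>K \<Longrightarrow> y\<in>K \<Longrightarrow> meet x y = bot \<longleftrightarrow> le y (n x)"
proof
  assume k: "x\<in>K" "y\<in>K" "meet x y = bot"
  have "p (n (p (n y) (n x))) (n (p (n y) x)) = y" using hunt k by simp
  then have "p bot (n (p (n y) x)) = y" using k meet_comm unfolding meet_def by metis
  then have e: "n (p (n y) x) = y" using join_bot comm botK k ncl cl by metis
  have "le x (p (n y) x)" using le_join2 k ncl by simp
  then have "le (n (p (n y) x)) (n x)" using antitone k ncl cl by simp
  then show "le y (n x)" using e by simp
next
  assume k: "x\<in>K" "y\<in>K" "le y (n x)"
  have "le (meet x y) (meet x (n x))"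
    using meet_glb meet_le1 meet_le2 le_trans k meetK ncl by metis
  then show "meet x y = bot" using meet_compl le_bot k meetK by simp
qed
lemma meet_top: "x\<in>K \<Longrightarrow> meet x top = x"
  unfolding meet_def using join_bot dneg ncl unfolding bot_def by simp
lemma meet_idem: "x\<in>K \<Longrightarrow> meet x x = x"
  unfolding meet_def using idem dneg ncl by simp
lemma le_meet_iff: "x\<in>K \<Longrightarrow> y\<in>K \<Longrightarrow> le x y \<longleftrightarrow> meet x y = x"
  using meet_glb meet_le1 meet_le2 le_refl le_antisym meetK by metis
end

locale wal =
  fixes A :: "'a ra_sig"
  assumes WA: "WA A" and ATOMIC: "atomic A"
begin

abbreviation "K \<equiv> wcar A"
abbreviation "pl \<equiv> wplus A"
abbreviation "ng \<equiv> wcompl A"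
abbreviation "cp \<equiv> wcomp A"
abbreviation "cv \<equiv> wconv A"
abbreviation "ii \<equiv> wid A"

lemma iiK: "ii \<in> K" using WA unfolding WA_def by blast
lemma plK: "x\<in>K \<Longrightarrow> y\<in>K \<Longrightarrow> pl x y \<in> K" using WA unfolding WA_def by blast
lemma cpK: "x\<in>K \<Longrightarrow> y\<in>K \<Longrightarrow> cp x y \<in> K" using WA unfolding WA_def by blast
lemma ngK: "x\<in>K \<Longrightarrow> ng x \<in> K" using WA unfolding WA_def by blast
lemma cvK: "x\<in>K \<Longrightarrow> cv x \<in> K" using WA unfolding WA_def by blast
lemma ax_comm: "x\<in>K \<Longrightarrow> y\<in>K \<Longrightarrow> pl x y = pl y x" using WA unfolding WA_def by blast
lemma ax_assoc: "x\<in>K \<Longrightarrow> y\<in>K \<Longrightarrow> z\<in>K \<Longrightarrow> pl x (pl y z) = pl (pl x y) z" using WA unfolding WA_def by blast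
lemma ax_hunt: "x\<in>K \<Longrightarrow> y\<in>K \<Longrightarrow> pl (ng (pl (ng x) (ng y))) (ng (pl (ng x) y)) = x" using WA unfolding WA_def by blast
lemma ax_wa: "x\<in>K \<Longrightarrow> cp (cp (wmeet A x ii) (wone A)) (wone A) = cp (wmeet A x ii) (wone A)"
  using WA iiK unfolding WA_def by blast
lemma ax_dist: "x\<in>K \<Longrightarrow> y\<in>K \<Longrightarrow> z\<in>K \<Longrightarrow> cp (pl x y) z = pl (cp x z) (cp y z)" using WA unfolding WA_def by blast
lemma ax_id: "x\<in>K \<Longrightarrow> cp x ii = x" using WA iiK unfolding WA_def by blast
lemma ax_cc: "x\<in>K \<Longrightarrow> cv (cv x) = x" using WA iiK unfolding WA_def by blast
lemma ax_cvp: "x\<in>K \<Longrightarrow> y\<in>K \<Longrightarrow> cv (pl x y) = pl (cv x) (cv y)" using WA unfolding WA_def by blast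
lemma ax_cvc: "x\<in>K \<Longrightarrow> y\<in>K \<Longrightarrow> cv (cp x y) = cp (cv y) (cv x)" using WA unfolding WA_def by blast
lemma ax_tarski: "x\<in>K \<Longrightarrow> y\<in>K \<Longrightarrow> pl (cp (cv x) (ng (cp x y))) (ng y) = ng y" using WA iiK unfolding WA_def by blast

sublocale B: hba K pl ng ii
proof
  show "\<And>x y. x\<in>K \<Longrightarrow> y\<in>K \<Longrightarrow> pl x y \<in> K" by (rule plK)
  show "\<And>x. x\<in>K \<Longrightarrow> ng x \<in> K" by (rule ngK)
  show "ii \<in> K" by (rule iiK)
  show "\<And>x y. x\<in>K \<Longrightarrow> y\<in>K \<Longrightarrow> pl x y = pl y x" by (rule ax_comm)
  show "\<And>x y z. x\<in>K \<Longrightarrow> y\<in>K \<Longrightarrow> z\<in>K \<Longrightarrow> pl x (pl y z) = pl (pl x y) z" by (rule ax_assoc)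
  show "\<And>x y. x\<in>K \<Longrightarrow> y\<in>K \<Longrightarrow> pl (ng (pl (ng x) (ng y))) (ng (pl (ng x) y)) = x" by (rule ax_hunt)
qed

lemma top_def': "B.top = wone A" unfolding B.top_def wone_def wdiv_def by simp
lemma bot_def': "B.bot = wzero A" unfolding B.bot_def wzero_def top_def' by simp
lemma le_def': "B.le = wle A" unfolding B.le_def[abs_def] wle_def[abs_def] by simp
lemma meet_def': "B.meet = wmeet A" unfolding B.meet_def[abs_def] wmeet_def[abs_def] by simp

abbreviation "le \<equiv> B.le"
abbreviation "mt \<equiv> B.meet"
abbreviation "tp \<equiv> B.top"
abbreviation "bt \<equiv> B.bot"

lemmas KK = iiK plK cpK ngK cvK B.topK B.botK B.meetK

lemma comp_mono_l: "x\<in>K \<Longrightarrow> y\<in>K \<Longrightarrow> z\<in>K \<Longrightarrow> le x y \<Longrightarrow> le (cp x z) (cp y z)"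
  unfolding B.le_def using ax_dist by metis

lemma comp_dist_r: "x\<in>K \<Longrightarrow> y\<in>K \<Longrightarrow> z\<in>K \<Longrightarrow> cp x (pl y z) = pl (cp x y) (cp x z)"
proof -
  assume k: "x\<in>K" "y\<in>K" "z\<in>K"
  have "cv (cp x (pl y z)) = cv (pl (cp x y) (cp x z))"
    using k by (simp add: ax_cvc ax_cvp ax_dist cvK cpK plK)
  then have "cv (cv (cp x (pl y z))) = cv (cv (pl (cp x y) (cp x z)))" by simp
  then show ?thesis using k by (simp add: ax_cc cpK plK)
qed

lemma comp_mono_r: "x\<in>K \<Longrightarrow> y\<in>K \<Longrightarrow> z\<in>K \<Longrightarrow> le x y \<Longrightarrow> le (cp z x) (cp z y)"
  unfolding B.le_def using comp_dist_r by metis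

lemma comp_mono: "x\<in>K \<Longrightarrow> y\<in>K \<Longrightarrow> z\<in>K \<Longrightarrow> w\<in>K \<Longrightarrow> le x y \<Longrightarrow> le z w \<Longrightarrow> le (cp x z) (cp y w)"
  using comp_mono_l comp_mono_r B.le_trans cpK by metis

lemma cv_mono: "x\<in>K \<Longrightarrow> y\<in>K \<Longrightarrow> le x y \<Longrightarrow> le (cv x) (cv y)"
  unfolding B.le_def using ax_cvp by metis

lemma cv_le_iff: "x\<in>K \<Longrightarrow> y\<in>K \<Longrightarrow> le (cv x) (cv y) \<longleftrightarrow> le x y"
  using cv_mono ax_cc cvK by metis

lemma cv_inj: "x\<in>K \<Longrightarrow> y\<in>K \<Longrightarrow> cv x = cv y \<Longrightarrow> x = y"
  using ax_cc by metis

lemma cv_ii: "cv ii = ii"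
proof -
  have "cv (cp (cv ii) ii) = cp (cv ii) (cv (cv ii))" using ax_cvc iiK cvK by simp
  then have "cv (cv ii) = cp (cv ii) ii" using ax_id ax_cc iiK cvK by simp
  then have "ii = cv ii" using ax_cc ax_id iiK cvK by simp
  then show ?thesis by simp
qed

lemma id_l: "x\<in>K \<Longrightarrow> cp ii x = x"
proof -
  assume k: "x\<in>K"
  have "cv (cp ii x) = cv x" using ax_cvc[of ii x] k iiK cv_ii ax_id cvK by simp
  then show ?thesis using cv_inj k cpK iiK by blast
qed

lemma cv_top: "cv tp = tp"
proof -
  have "le (cv tp) tp" using B.le_top cvK KK by simp
  moreover have "le tp (cv tp)"
  proof -
    have "le (cv tp) tp" using B.le_top cvK KK by simp
    then have "le (cv (cv tp)) (cv tp)" using cv_mono cvK KK by simp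
    then show ?thesis using ax_cc KK by simp
  qed
  ultimately show ?thesis using B.le_antisym cvK KK by simp
qed

lemma cv_bot: "cv bt = bt"
proof -
  have "le bt (cv bt)" using B.bot_le cvK KK by simp
  then have "le (cv bt) (cv (cv bt))" using cv_mono cvK KK by simp
  then have "le (cv bt) bt" using ax_cc KK by simp
  then show ?thesis using B.le_bot cvK KK by simp
qed

lemma cv_zero_iff: "x\<in>K \<Longrightarrow> cv x = bt \<longleftrightarrow> x = bt"
  using cv_bot ax_cc by metis

lemma peirce: "x\<in>K \<Longrightarrow> y\<in>K \<Longrightarrow> z\<in>K \<Longrightarrow> mt (cp x y) z = bt \<Longrightarrow> mt (cp (cv x) z) y = bt"
proof -
  assume k: "x\<in>K" "y\<in>K" "z\<in>K" "mt (cp x y) z = bt"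
  then have "le z (ng (cp x y))" using B.meet_zero_iff cpK by simp
  then have "le (cp (cv x) z) (cp (cv x) (ng (cp x y)))" using comp_mono_r k cvK ngK cpK by simp
  moreover have "le (cp (cv x) (ng (cp x y))) (ng y)" using ax_tarski k unfolding B.le_def by simp
  ultimately have "le (cp (cv x) z) (ng y)" using B.le_trans k KK by metis
  then have "mt y (cp (cv x) z) = bt" using B.meet_zero_iff k KK by simp
  then show ?thesis using B.meet_comm k KK by metis
qed

lemma peirce_iff: "x\<in>K \<Longrightarrow> y\<in>K \<Longrightarrow> z\<in>K \<Longrightarrow> mt (cp x y) z = bt \<longleftrightarrow> mt (cp (cv x) z) y = bt"
  using peirce[of x y z] peirce[of "cv x" z y] ax_cc cvK by auto

lemma le_zero: "x\<in>K \<Longrightarrow> y\<in>K \<Longrightarrow> le x y \<Longrightarrow> y = bt \<Longrightarrow> x = bt"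
  using B.le_bot by blast

lemma meet_le_zero: "x\<in>K \<Longrightarrow> y\<in>K \<Longrightarrow> le x y \<Longrightarrow> x \<noteq> bt \<Longrightarrow> mt x y \<noteq> bt"
  using B.le_meet_iff by metis

lemma At_K: "a \<in> At A \<Longrightarrow> a \<in> K" unfolding At_def by blast
lemma At_nz: "a \<in> At A \<Longrightarrow> a \<noteq> bt" unfolding At_def bot_def' by blast
lemma At_min: "a \<in> At A \<Longrightarrow> y \<in> K \<Longrightarrow> le y a \<Longrightarrow> y = bt \<or> y = a"
  unfolding At_def bot_def' le_def' by blast

lemma at_le: "a \<in> At A \<Longrightarrow> x \<in> K \<Longrightarrow> mt a x \<noteq> bt \<Longrightarrow> le a x"
proof -
  assume a: "a \<in> At A" "x \<in> K" "mt a x \<noteq> bt"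
  have "le (mt a x) a" using B.meet_le1 a At_K by simp
  then have "mt a x = a" using At_min[of a "mt a x"] a At_K KK by auto
  then show ?thesis using B.le_meet_iff a At_K by simp
qed

lemma at_eq: "a \<in> At A \<Longrightarrow> b \<in> At A \<Longrightarrow> le a b \<Longrightarrow> a = b"
  using At_min At_nz At_K by blast

lemma at_meet: "a \<in> At A \<Longrightarrow> b \<in> At A \<Longrightarrow> mt a b \<noteq> bt \<Longrightarrow> a = b"
  using at_le at_eq At_K by blast

lemma at_meet_le: "a \<in> At A \<Longrightarrow> x \<in> K \<Longrightarrow> le a x \<Longrightarrow> mt x a \<noteq> bt"
  using meet_le_zero B.meet_comm At_K At_nz by metis

lemma cv_at: "a \<in> At A \<Longrightarrow> cv a \<in> At A"
proof -
  assume a: "a \<in> At A"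
  have "cv a \<in> K" using a At_K cvK by simp
  moreover have "cv a \<noteq> bt" using a At_nz cv_zero_iff At_K by simp
  moreover have "\<forall>y\<in>K. le y (cv a) \<longrightarrow> y = bt \<or> y = cv a"
  proof (intro ballI impI)
    fix y assume y: "y\<in>K" "le y (cv a)"
    then have "le (cv y) a" using cv_le_iff[of "cv y" a] ax_cc a At_K cvK by simp
    then have "cv y = bt \<or> cv y = a" using At_min a cvK y by simp
    then show "y = bt \<or> y = cv a" using cv_zero_iff y ax_cc by metis
  qed
  ultimately show ?thesis unfolding At_def bot_def' le_def' by blast
qed

lemma atomic': "x \<in> K \<Longrightarrow> x \<noteq> bt \<Longrightarrow> \<exists>a\<in>At A. le a x"
  using ATOMIC unfolding atomic_def bot_def' le_def' by blast

lemma sub_comp_le: "e \<in> K \<Longrightarrow> f \<in> K \<Longrightarrow> le e ii \<Longrightarrow> le f ii \<Longrightarrow> le (cp f e) (mt f e)"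
proof -
  assume k: "e \<in> K" "f \<in> K" "le e ii" "le f ii"
  have a: "le (cp f e) (cp f ii)" using comp_mono_r k KK by simp
  have b: "le (cp f e) (cp ii e)" using comp_mono_l k KK by simp
  show ?thesis using B.meet_glb[OF _ _ _ a b] ax_id id_l k KK by simp
qed

lemma split_meet: "x \<in> K \<Longrightarrow> y \<in> K \<Longrightarrow> pl (mt x y) (mt x (ng y)) = x"
  using ax_hunt[of x y] B.dneg[of y] unfolding B.meet_def by simp

lemma subid_cv: "d \<in> K \<Longrightarrow> le d ii \<Longrightarrow> cv d = d"
proof -
  have one: "le (cv d) d" if d: "d \<in> K" "le d ii" for d
  proof -
    define e where "e = mt (ng d) ii"
    define g where "g = mt (ng d) (ng ii)"
    have eK: "e \<in> K" and gK: "g \<in> K" unfolding e_def g_def using d KK by auto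
    have spl: "ng d = pl e g" unfolding e_def g_def using split_meet[of "ng d" ii] d KK by simp
    have ei: "le e ii" unfolding e_def using B.meet_le2 d KK by simp
    have "le (cp d e) (mt d e)" using sub_comp_le[OF eK d(1) ei d(2)] .
    moreover have "le (mt d e) (mt d (ng d))"
    proof -
      have "le (mt d e) (ng d)" unfolding e_def
        using B.le_trans[OF _ _ _ B.meet_le2 B.meet_le1] d KK by simp
      then show ?thesis using B.meet_glb B.meet_le1 d eK KK by simp
    qed
    ultimately have "le (cp d e) bt" using B.meet_compl B.le_trans d eK KK by metis
    then have de: "cp d e = bt" using B.le_bot d eK KK by simp
    have "le (cp d g) (cp ii (ng ii))"
      using comp_mono[OF d(1) iiK gK _ d(2)] B.meet_le2 d KK unfolding g_def by simp
    then have dg: "le (cp d g) (ng ii)" using id_l KK by simp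
    have "cp d (ng d) = pl (cp d e) (cp d g)" using spl comp_dist_r d eK gK by simp
    also have "\<dots> = cp d g" using de B.join_bot B.comm d gK KK by metis
    finally have "le (cp d (ng d)) (ng ii)" using dg by simp
    then have "mt ii (cp d (ng d)) = bt" using B.meet_zero_iff d KK by simp
    then have "mt (cp d (ng d)) ii = bt" using B.meet_comm d KK by metis
    then have "mt (cp (cv d) ii) (ng d) = bt" using peirce d KK by simp
    then have "mt (cv d) (ng d) = bt" using ax_id cvK d by simp
    then have "le (ng d) (ng (cv d))" using B.meet_zero_iff d KK by simp
    then show ?thesis using B.antitone_iff d KK by simp
  qed
  assume d: "d \<in> K" "le d ii"
  have "le (cv d) ii" using cv_mono[of d ii] d cv_ii KK by simp
  then have "le (cv (cv d)) (cv d)" using one[of "cv d"] d KK by simp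
  then have "le d (cv d)" using ax_cc d by simp
  then show ?thesis using one[OF d] B.le_antisym d KK by simp
qed

lemma wa_sub: "f \<in> K \<Longrightarrow> le f ii \<Longrightarrow> cp (cp f tp) tp = cp f tp"
proof -
  assume k: "f \<in> K" "le f ii"
  have "mt f ii = f" using B.le_meet_iff k KK by simp
  then show ?thesis using ax_wa[of f] k unfolding meet_def' top_def' by simp
qed

lemma S2: "e \<in> K \<Longrightarrow> f \<in> K \<Longrightarrow> le e ii \<Longrightarrow> le f ii \<Longrightarrow> mt e f = bt \<Longrightarrow> mt (cp e tp) (cp f tp) = bt"
proof -
  assume k: "e \<in> K" "f \<in> K" "le e ii" "le f ii" "mt e f = bt"
  have a: "cp f e = bt" using sub_comp_le[of e f] k B.meet_comm B.le_bot KK by metis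
  have "mt (cp (cv f) e) tp = bt" using a subid_cv k B.meet_top KK by simp
  then have b: "mt (cp f tp) e = bt" using peirce_iff[of f tp e] k KK by simp
  have c: "mt (cp (cp f tp) tp) e = bt" using b wa_sub k by simp
  have "mt (cp (cv (cp tp f)) tp) e = bt" using c ax_cvc cv_top subid_cv k KK by simp
  then have "mt (cp (cp tp f) e) tp = bt" using peirce_iff[of "cp tp f" e tp] k KK by simp
  then have d: "cp (cp tp f) e = bt" using B.meet_top k KK by simp
  have "cv (cp (cp tp f) e) = cp e (cp f tp)"
    using ax_cvc subid_cv cv_top k KK by simp
  then have e: "cp e (cp f tp) = bt" using d cv_bot by simp
  have "mt (cp (cv e) (cp f tp)) tp = bt" using e subid_cv k B.meet_top KK by simp
  then show ?thesis using peirce_iff[of e tp "cp f tp"] k KK by simp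
qed

lemma dom_ex: "x \<in> At A \<Longrightarrow> \<exists>e\<in>At A. le e ii \<and> le x (cp e x)"
proof -
  assume x: "x \<in> At A"
  have xK: "x \<in> K" using x At_K by simp
  have nz: "mt (cp x (cv x)) ii \<noteq> bt"
  proof
    assume "mt (cp x (cv x)) ii = bt"
    then have "mt (cp (cv x) ii) (cv x) = bt" using peirce xK KK by simp
    then have "cv x = bt" using ax_id B.meet_idem xK KK by simp
    then show False using x At_nz cv_zero_iff xK by simp
  qed
  have mK: "mt (cp x (cv x)) ii \<in> K" using xK KK by simp
  obtain e where e: "e \<in> At A" "le e (mt (cp x (cv x)) ii)" using atomic'[OF mK nz] by blast
  have eK: "e \<in> K" using e At_K by simp
  have ei: "le e ii" using B.le_trans[OF eK mK iiK e(2) B.meet_le2] xK KK by simp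
  have ex: "le e (cp x (cv x))" using B.le_trans[OF eK mK _ e(2) B.meet_le1] xK KK by simp
  have "mt (cp x (cv x)) e \<noteq> bt" using at_meet_le[OF e(1) _ ex] xK KK by simp
  then have "mt (cp (cv x) e) (cv x) \<noteq> bt" using peirce_iff[of x "cv x" e] xK eK KK by simp
  then have "mt (cv x) (cp (cv x) e) \<noteq> bt" using B.meet_comm[of "cp (cv x) e" "cv x"] xK eK KK by simp
  then have "le (cv x) (cp (cv x) e)" using at_le cv_at x xK eK KK by simp
  then have "le (cv (cv x)) (cv (cp (cv x) e))" using cv_mono xK eK KK by simp
  then have "le x (cp e x)" using ax_cc ax_cvc subid_cv[OF eK ei] xK eK KK by simp
  then show ?thesis using e ei by blast
qed

lemma dom_uniq: "x \<in> At A \<Longrightarrow> e1 \<in> At A \<Longrightarrow> e2 \<in> At A \<Longrightarrow> le e1 ii \<Longrightarrow> le e2 ii \<Longrightarrow>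
   le x (cp e1 tp) \<Longrightarrow> le x (cp e2 tp) \<Longrightarrow> e1 = e2"
proof (rule ccontr)
  assume k: "x \<in> At A" "e1 \<in> At A" "e2 \<in> At A" "le e1 ii" "le e2 ii"
     "le x (cp e1 tp)" "le x (cp e2 tp)" "e1 \<noteq> e2"
  have K': "x\<in>K" "e1\<in>K" "e2\<in>K" using k At_K by auto
  have "mt e1 e2 = bt" using at_meet k by blast
  then have "mt (cp e1 tp) (cp e2 tp) = bt" using S2 k K' by simp
  moreover have "le x (mt (cp e1 tp) (cp e2 tp))" using B.meet_glb k K' KK by simp
  ultimately have "x = bt" using B.le_bot K' by simp
  then show False using k At_nz by simp
qed

definition dom :: "'a \<Rightarrow> 'a" where
  "dom x = (THE e. e \<in> At A \<and> le e ii \<and> le x (cp e x))"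

lemma le_cp_top: "x \<in> K \<Longrightarrow> e \<in> K \<Longrightarrow> le x (cp e x) \<Longrightarrow> le x (cp e tp)"
proof -
  assume k: "x \<in> K" "e \<in> K" "le x (cp e x)"
  have "le (cp e x) (cp e tp)" using comp_mono_r[OF k(1) B.topK k(2) B.le_top[OF k(1)]] .
  then show ?thesis using B.le_trans[OF k(1) _ _ k(3)] k KK by simp
qed

lemma dom_prop: "x \<in> At A \<Longrightarrow> dom x \<in> At A \<and> le (dom x) ii \<and> le x (cp (dom x) x)"
proof -
  assume x: "x \<in> At A"
  obtain e where e: "e\<in>At A" "le e ii" "le x (cp e x)" using dom_ex x by blast
  have uniq: "\<And>e'. e' \<in> At A \<and> le e' ii \<and> le x (cp e' x) \<Longrightarrow> e' = e"
  proof -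
    fix e' assume h: "e' \<in> At A \<and> le e' ii \<and> le x (cp e' x)"
    have "le x (cp e' tp)" using le_cp_top h At_K x by blast
    moreover have "le x (cp e tp)" using le_cp_top e At_K x by blast
    ultimately show "e' = e" using dom_uniq[OF x] h e by blast
  qed
  have "dom x = e" unfolding dom_def
  proof (rule the_equality)
    show "e \<in> At A \<and> le e ii \<and> le x (cp e x)" using e by blast
    show "\<And>e'. e' \<in> At A \<and> le e' ii \<and> le x (cp e' x) \<Longrightarrow> e' = e" by (rule uniq)
  qed
  then show ?thesis using e by simp
qed

lemma dom_char: "x \<in> At A \<Longrightarrow> e \<in> At A \<Longrightarrow> le e ii \<Longrightarrow> le x (cp e tp) \<Longrightarrow> dom x = e"
proof -
  assume k: "x \<in> At A" "e \<in> At A" "le e ii" "le x (cp e tp)"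
  have d: "dom x \<in> At A" "le (dom x) ii" "le x (cp (dom x) x)" using dom_prop k by auto
  have "le x (cp (dom x) tp)" using le_cp_top d At_K k by blast
  then show ?thesis using dom_uniq[OF k(1) d(1) k(2) d(2) k(3)] k by blast
qed

lemma dom_comp: "x \<in> At A \<Longrightarrow> y \<in> At A \<Longrightarrow> w \<in> K \<Longrightarrow> le x (cp y w) \<Longrightarrow> dom x = dom y"
proof -
  assume k: "x \<in> At A" "y \<in> At A" "w \<in> K" "le x (cp y w)"
  have xK: "x\<in>K" using k(1) by (rule At_K)
  have yK: "y\<in>K" using k(2) by (rule At_K)
  define d where "d = dom y"
  have dp: "d \<in> At A \<and> le d ii \<and> le y (cp d y)" unfolding d_def by (rule dom_prop[OF k(2)])
  have dK: "d \<in> K" using dp At_K by blast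
  have dyK: "cp d y \<in> K" using dK yK by (rule cpK)
  have dtK: "cp d tp \<in> K" using dK B.topK by (rule cpK)
  have s1: "le (cp y w) (cp (cp d y) w)" using comp_mono_l[OF yK dyK k(3)] dp by blast
  have s2: "le (cp d y) (cp d tp)" using comp_mono_r[OF yK B.topK dK B.le_top[OF yK]] .
  have s3: "le (cp (cp d y) w) (cp (cp d tp) tp)"
    using comp_mono[OF dyK dtK k(3) B.topK s2 B.le_top[OF k(3)]] .
  have s4: "cp (cp d tp) tp = cp d tp" using wa_sub dK dp by blast
  have ywK: "cp y w \<in> K" using yK k(3) by (rule cpK)
  have dywK: "cp (cp d y) w \<in> K" using dyK k(3) by (rule cpK)
  have "le x (cp (cp d y) w)" using B.le_trans[OF xK ywK dywK k(4) s1] .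
  then have "le x (cp (cp d tp) tp)" using B.le_trans[OF xK dywK _ _ s3] dtK B.topK cpK by blast
  then have "le x (cp d tp)" using s4 by simp
  then show ?thesis using dom_char[OF k(1)] dp unfolding d_def by blast
qed

lemma dom_id: "e \<in> At A \<Longrightarrow> le e ii \<Longrightarrow> dom e = e"
proof -
  assume e: "e \<in> At A" "le e ii"
  have eK: "e \<in> K" using e(1) by (rule At_K)
  have "le (cp e ii) (cp e tp)" using comp_mono_r[OF iiK B.topK eK B.le_top[OF iiK]] .
  then have "le e (cp e tp)" using ax_id[OF eK] by simp
  then show ?thesis using dom_char[OF e(1) e(1) e(2)] by blast
qed

end

context wal begin
lemma less_3_cases: "k < (3::nat) \<Longrightarrow> k = 0 \<or> k = 1 \<or> k = 2" by auto

lemma SB_E: "t \<in> SB A \<Longrightarrow> tr t 0 \<in> At A \<and> tr t 1 \<in> At A \<and> tr t 2 \<in> At A \<and> le (tr t 1) (cp (tr t 2) (tr t 0))"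
  unfolding SB_def le_def' by blast

lemma SB_at: "t \<in> SB A \<Longrightarrow> k < 3 \<Longrightarrow> tr t k \<in> At A"
  using SB_E less_3_cases by blast

lemma SB_K: "t \<in> SB A \<Longrightarrow> k < 3 \<Longrightarrow> tr t k \<in> K"
  using SB_at At_K by blast

lemma meet_mono: "x\<in>K \<Longrightarrow> y\<in>K \<Longrightarrow> z\<in>K \<Longrightarrow> le x y \<Longrightarrow> le (mt x z) (mt y z)"
proof -
  assume k: "x\<in>K" "y\<in>K" "z\<in>K" "le x y"
  have mK: "mt x z \<in> K" using k by (simp add: B.meetK)
  have "le (mt x z) y" using B.le_trans[OF mK k(1) k(2) B.meet_le1[OF k(1) k(3)] k(4)] .
  then show ?thesis using B.meet_glb[OF k(2) k(3) mK] B.meet_le2[OF k(1) k(3)] by blast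
qed

lemma W1: "t \<in> SB A \<Longrightarrow> le (tr t 2) ii \<Longrightarrow> tr t 0 = tr t 1"
proof -
  assume t: "t \<in> SB A" "le (tr t 2) ii"
  have a: "tr t 0 \<in> At A" "tr t 1 \<in> At A" "tr t 2 \<in> At A" "le (tr t 1) (cp (tr t 2) (tr t 0))"
    using SB_E[OF t(1)] by auto
  have K': "tr t 0 \<in> K" "tr t 1 \<in> K" "tr t 2 \<in> K" using a At_K by auto
  have "le (cp (tr t 2) (tr t 0)) (cp ii (tr t 0))" using comp_mono_l[OF K'(3) iiK K'(1) t(2)] .
  then have "le (cp (tr t 2) (tr t 0)) (tr t 0)" using id_l[OF K'(1)] by simp
  then have "le (tr t 1) (tr t 0)" using B.le_trans[OF K'(2) _ K'(1) a(4)] cpK K' by blast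
  then show ?thesis using at_eq a by metis
qed

lemma W2: "t \<in> SB A \<Longrightarrow> le (tr t 0) ii \<Longrightarrow> tr t 1 = tr t 2"
proof -
  assume t: "t \<in> SB A" "le (tr t 0) ii"
  have a: "tr t 0 \<in> At A" "tr t 1 \<in> At A" "tr t 2 \<in> At A" "le (tr t 1) (cp (tr t 2) (tr t 0))"
    using SB_E[OF t(1)] by auto
  have K': "tr t 0 \<in> K" "tr t 1 \<in> K" "tr t 2 \<in> K" using a At_K by auto
  have "le (cp (tr t 2) (tr t 0)) (cp (tr t 2) ii)" using comp_mono_r[OF K'(1) iiK K'(3) t(2)] .
  then have "le (cp (tr t 2) (tr t 0)) (tr t 2)" using ax_id[OF K'(3)] by simp
  then have "le (tr t 1) (tr t 2)" using B.le_trans[OF K'(2) _ K'(3) a(4)] cpK K' by blast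
  then show ?thesis using at_eq a by metis
qed

lemma cyc: "t \<in> SB A \<Longrightarrow> mt (cp (cv (tr t 2)) (tr t 1)) (tr t 0) \<noteq> bt"
proof -
  assume t: "t \<in> SB A"
  have a: "tr t 0 \<in> At A" "tr t 1 \<in> At A" "tr t 2 \<in> At A" "le (tr t 1) (cp (tr t 2) (tr t 0))"
    using SB_E[OF t] by auto
  have K': "tr t 0 \<in> K" "tr t 1 \<in> K" "tr t 2 \<in> K" using a At_K by auto
  have "mt (cp (tr t 2) (tr t 0)) (tr t 1) \<noteq> bt" using at_meet_le[OF a(2) _ a(4)] cpK K' by blast
  then show ?thesis using peirce_iff[OF K'(3) K'(1) K'(2)] by simp
qed

lemma W3: "t \<in> SB A \<Longrightarrow> le (tr t 1) ii \<Longrightarrow> tr t 2 = cv (tr t 0)"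
proof -
  assume t: "t \<in> SB A" "le (tr t 1) ii"
  have a: "tr t 0 \<in> At A" "tr t 1 \<in> At A" "tr t 2 \<in> At A"
    using SB_E[OF t(1)] by auto
  have K': "tr t 0 \<in> K" "tr t 1 \<in> K" "tr t 2 \<in> K" using a At_K by auto
  have c2K: "cv (tr t 2) \<in> K" using cvK K' by blast
  have "le (cp (cv (tr t 2)) (tr t 1)) (cp (cv (tr t 2)) ii)" using comp_mono_r[OF K'(2) iiK c2K t(2)] .
  then have l: "le (cp (cv (tr t 2)) (tr t 1)) (cv (tr t 2))" using ax_id[OF c2K] by simp
  have "le (mt (cp (cv (tr t 2)) (tr t 1)) (tr t 0)) (mt (cv (tr t 2)) (tr t 0))"
    using meet_mono[OF _ c2K K'(1) l] cpK c2K K' by blast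
  then have "mt (cv (tr t 2)) (tr t 0) \<noteq> bt" using cyc[OF t(1)] B.le_bot B.meetK cpK c2K K' by metis
  then have "cv (tr t 2) = tr t 0" using at_meet cv_at a by blast
  then show ?thesis using ax_cc K' by metis
qed

lemma T1: "t \<in> SB A \<Longrightarrow> dom (tr t 1) = dom (tr t 2)"
proof -
  assume t: "t \<in> SB A"
  have a: "tr t 0 \<in> At A" "tr t 1 \<in> At A" "tr t 2 \<in> At A" "le (tr t 1) (cp (tr t 2) (tr t 0))"
    using SB_E[OF t] by auto
  show ?thesis using dom_comp[OF a(2) a(3) _ a(4)] a(1) At_K by blast
qed

lemma T2: "t \<in> SB A \<Longrightarrow> dom (tr t 0) = dom (cv (tr t 2))"
proof -
  assume t: "t \<in> SB A"
  have a: "tr t 0 \<in> At A" "tr t 1 \<in> At A" "tr t 2 \<in> At A"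
    using SB_E[OF t] by auto
  have K': "tr t 0 \<in> K" "tr t 1 \<in> K" "tr t 2 \<in> K" using a At_K by auto
  have "mt (tr t 0) (cp (cv (tr t 2)) (tr t 1)) \<noteq> bt"
    using cyc[OF t] B.meet_comm cpK cvK K' by metis
  then have "le (tr t 0) (cp (cv (tr t 2)) (tr t 1))" using at_le a cpK cvK K' by blast
  then show ?thesis using dom_comp a cv_at K' by blast
qed

lemma T3: "t \<in> SB A \<Longrightarrow> dom (cv (tr t 1)) = dom (cv (tr t 0))"
proof -
  assume t: "t \<in> SB A"
  have a: "tr t 0 \<in> At A" "tr t 1 \<in> At A" "tr t 2 \<in> At A" "le (tr t 1) (cp (tr t 2) (tr t 0))"
    using SB_E[OF t] by auto
  have K': "tr t 0 \<in> K" "tr t 1 \<in> K" "tr t 2 \<in> K" using a At_K by auto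
  have "le (cv (tr t 1)) (cv (cp (tr t 2) (tr t 0)))" using cv_mono a(4) cpK K' by blast
  then have "le (cv (tr t 1)) (cp (cv (tr t 0)) (cv (tr t 2)))" using ax_cvc K' by simp
  then show ?thesis using dom_comp cv_at a cvK K' by blast
qed

lemma SE_refl: "SE A k k = SB A" unfolding SE_def by simp
lemma SE_sym: "SE A k l = SE A l k" unfolding SE_def by (simp add: add.commute diff_diff_left)
lemma SE_char: "k \<noteq> l \<Longrightarrow> t \<in> SE A k l \<longleftrightarrow> t \<in> SB A \<and> le (tr t (3-k-l)) ii"
  unfolding SE_def le_def' by simp
lemma SE_SB: "t \<in> SE A k l \<Longrightarrow> t \<in> SB A" unfolding SE_def by (auto split: if_splits)

lemma E3: "t \<in> SB A \<Longrightarrow> a < 3 \<Longrightarrow> b < 3 \<Longrightarrow> a \<noteq> b \<Longrightarrow> le (tr t a) ii \<Longrightarrow> le (tr t b) ii \<Longrightarrow> c < 3 \<Longrightarrow> le (tr t c) ii"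
proof -
  assume h: "t \<in> SB A" "a < 3" "b < 3" "a \<noteq> b" "le (tr t a) ii" "le (tr t b) ii" "c < 3"
  have "le (tr t 0) ii \<and> le (tr t 1) ii \<and> le (tr t 2) ii"
  proof -
    have cases: "(a = 0 \<or> a = 1 \<or> a = 2) \<and> (b = 0 \<or> b = 1 \<or> b = 2)" using h by auto
    show ?thesis using cases h W1[OF h(1)] W2[OF h(1)] by auto
  qed
  then show ?thesis using h(7) less_3_cases by blast
qed

lemma SE_trans: "t \<in> SE A i j \<Longrightarrow> t \<in> SE A j k \<Longrightarrow> i < 3 \<Longrightarrow> j < 3 \<Longrightarrow> k < 3 \<Longrightarrow> t \<in> SE A i k"
proof -
  assume h: "t \<in> SE A i j" "t \<in> SE A j k" "i < 3" "j < 3" "k < 3"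
  have tS: "t \<in> SB A" using h SE_SB by blast
  show ?thesis
  proof (cases "i = j \<or> j = k \<or> i = k")
    case True then show ?thesis using h tS SE_refl by auto
  next
    case False
    then have d: "i \<noteq> j" "j \<noteq> k" "i \<noteq> k" by auto
    have a: "le (tr t (3-i-j)) ii" "le (tr t (3-j-k)) ii" using h SE_char d by auto
    have "3-i-j \<noteq> 3-j-k" "3-i-j < 3" "3-j-k < 3" "3-i-k < 3" using d h by auto
    then have "le (tr t (3-i-k)) ii" using E3[OF tS _ _ _ a] by blast
    then show ?thesis using SE_char d tS by auto
  qed
qed

definition idat :: "'a tri \<Rightarrow> nat \<Rightarrow> 'a" where
  "idat t i = (if i = 0 then dom (tr t 2) else if i = 1 then dom (tr t 0) else dom (cv (tr t 0)))"

definition Lb :: "'a tri \<Rightarrow> nat \<Rightarrow> nat \<Rightarrow> 'a" where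
  "Lb t i j = (if i = j then idat t i else if i < j then tr t (3-i-j) else cv (tr t (3-i-j)))"

lemma Lb_simps: "Lb t 0 0 = idat t 0" "Lb t 0 1 = tr t 2" "Lb t 1 0 = cv (tr t 2)"
  "Lb t 0 2 = tr t 1" "Lb t 2 0 = cv (tr t 1)" "Lb t 1 1 = idat t 1"
  "Lb t 1 2 = tr t 0" "Lb t 2 1 = cv (tr t 0)" "Lb t 2 2 = idat t 2"
  unfolding Lb_def by simp_all

lemma idat_alt: "t \<in> SB A \<Longrightarrow> idat t 0 = dom (tr t 1) \<and> idat t 1 = dom (cv (tr t 2)) \<and> idat t 2 = dom (cv (tr t 1))"
  unfolding idat_def using T1 T2 T3 by simp

lemma R2: "s \<in> SB A \<Longrightarrow> t \<in> SB A \<Longrightarrow> l < 3 \<Longrightarrow> tr s l = tr t l \<Longrightarrow> i < 3 \<Longrightarrow> j < 3 \<Longrightarrow>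
   i \<noteq> l \<Longrightarrow> j \<noteq> l \<Longrightarrow> Lb s i j = Lb t i j"
proof -
  assume h: "s \<in> SB A" "t \<in> SB A" "l < 3" "tr s l = tr t l" "i < 3" "j < 3" "i \<noteq> l" "j \<noteq> l"
  show ?thesis
  proof (cases "i = j")
    case False
    then have "3 - i - j = l" using h by auto
    then show ?thesis unfolding Lb_def using h False by simp
  next
    case True
    have a: "idat s 0 = dom (tr s 1) \<and> idat s 1 = dom (cv (tr s 2)) \<and> idat s 2 = dom (cv (tr s 1))"
      using idat_alt h by blast
    have b: "idat t 0 = dom (tr t 1) \<and> idat t 1 = dom (cv (tr t 2)) \<and> idat t 2 = dom (cv (tr t 1))"
      using idat_alt h by blast
    have c: "(i = 0 \<or> i = 1 \<or> i = 2) \<and> (l = 0 \<or> l = 1 \<or> l = 2)" using h by auto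
    have "idat s i = idat t i" using c a b h unfolding idat_def by auto
    then show ?thesis unfolding Lb_def using True by simp
  qed
qed

lemma R1:
  assumes h: "t \<in> SB A" "i < 3" "i' < 3" "j < 3" "t \<in> SE A i i'"
  shows "Lb t i j = Lb t i' j \<and> Lb t j i = Lb t j i'"
proof (cases "i = i'")
  case True then show ?thesis by simp
next
  case False
  have c: "le (tr t (3-i-i')) ii" using SE_char False h by blast
  have K': "tr t 0 \<in> K" "tr t 1 \<in> K" "tr t 2 \<in> K" using SB_K h by auto
  have at: "tr t 0 \<in> At A" "tr t 1 \<in> At A" "tr t 2 \<in> At A" using SB_at h by auto
  have ia: "idat t 0 = dom (tr t 1) \<and> idat t 1 = dom (cv (tr t 2)) \<and> idat t 2 = dom (cv (tr t 1))"
    using idat_alt h by blast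
  have ijc: "j = 0 \<or> j = 1 \<or> j = 2" using h(4) by auto
  consider "3-i-i' = 2" | "3-i-i' = 1" | "3-i-i' = 0" using False h by linarith
  then show ?thesis
  proof cases
    case 1
    have e: "le (tr t 2) ii" using c 1 by simp
    have f1: "tr t 0 = tr t 1" using W1 h e by blast
    have f2: "cv (tr t 2) = tr t 2" using subid_cv K' e by blast
    have f3: "dom (tr t 2) = tr t 2" using dom_id at e by blast
    have i0: "idat t 0 = tr t 2" using f3 unfolding idat_def by simp
    have i1: "idat t 1 = tr t 2" using ia f2 f3 by simp
    have ii': "(i = 0 \<and> i' = 1) \<or> (i = 1 \<and> i' = 0)" using 1 h(2) h(3) False by auto
    from ii' ijc show ?thesis
      by (elim disjE conjE; hypsubst; simp only: Lb_simps i0 i1 f1 f2 simp_thms)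
  next
    case 2
    have e: "le (tr t 1) ii" using c 2 by simp
    have f1: "tr t 2 = cv (tr t 0)" using W3 h e by blast
    have f1': "cv (cv (tr t 0)) = tr t 0" using ax_cc K' by simp
    have f2: "cv (tr t 1) = tr t 1" using subid_cv K' e by blast
    have f3: "dom (tr t 1) = tr t 1" using dom_id at e by blast
    have i0: "idat t 0 = tr t 1" using ia f3 by simp
    have i2: "idat t 2 = tr t 1" using ia f2 f3 by simp
    have ii': "(i = 0 \<and> i' = 2) \<or> (i = 2 \<and> i' = 0)" using 2 h(2) h(3) False by auto
    from ii' ijc show ?thesis
      by (elim disjE conjE; hypsubst; simp only: Lb_simps i0 i2 f1 f1' f2 simp_thms)
  next
    case 3
    have e: "le (tr t 0) ii" using c 3 by simp
    have f1: "tr t 1 = tr t 2" using W2 h e by blast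
    have f2: "cv (tr t 0) = tr t 0" using subid_cv K' e by blast
    have f3: "dom (tr t 0) = tr t 0" using dom_id at e by blast
    have i1: "idat t 1 = tr t 0" using f3 unfolding idat_def by simp
    have i2: "idat t 2 = tr t 0" using f2 f3 unfolding idat_def by simp
    have ii': "(i = 1 \<and> i' = 2) \<or> (i = 2 \<and> i' = 1)" using 3 h(2) h(3) False by auto
    from ii' ijc show ?thesis
      by (elim disjE conjE; hypsubst; simp only: Lb_simps i1 i2 f1 f2 simp_thms)
  qed
qed

lemma Lb_coord: "s \<in> SB A \<Longrightarrow> t \<in> SB A \<Longrightarrow> i < 3 \<Longrightarrow> j < 3 \<Longrightarrow> i \<noteq> j \<Longrightarrow> Lb s i j = Lb t i j \<Longrightarrow>
  tr s (3-i-j) = tr t (3-i-j)"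
proof -
  assume h: "s \<in> SB A" "t \<in> SB A" "i < 3" "j < 3" "i \<noteq> j" "Lb s i j = Lb t i j"
  have k: "3-i-j < 3" using h by auto
  show ?thesis
  proof (cases "i < j")
    case True then show ?thesis using h unfolding Lb_def by simp
  next
    case False
    then have "cv (tr s (3-i-j)) = cv (tr t (3-i-j))" using h unfolding Lb_def by simp
    then show ?thesis using cv_inj SB_K h k by blast
  qed
qed

end

fun trl :: "'a ra_sig \<Rightarrow> 'a trail \<Rightarrow> bool" where
  "trl A [] = False"
| "trl A [x] = (fst x \<in> SB A \<and> snd x < 3)"
| "trl A (x#y#r) = (fst x \<in> SB A \<and> snd x < 3 \<and> fst x \<noteq> fst y \<and>
      (fst x, fst y) \<in> ST A (snd x) \<and> trl A (y#r))"

lemma all_nat_split: "(\<forall>i::nat. P i) \<longleftrightarrow> P 0 \<and> (\<forall>i. P (Suc i))"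
  by (metis not0_implies_Suc)

lemma is_trail_trl: "is_trail A p = trl A p"
proof (induction p rule: trl.induct)
  case (1 A) then show ?case by (simp add: is_trail_def)
next
  case (2 A x) then show ?case by (simp add: is_trail_def)
next
  case (3 A x y r)
  have "is_trail A (x#y#r) \<longleftrightarrow> (fst x \<in> SB A \<and> snd x < 3 \<and> fst x \<noteq> fst y \<and>
      (fst x, fst y) \<in> ST A (snd x) \<and> is_trail A (y#r))"
    unfolding is_trail_def
    apply (subst all_nat_split)
    apply (simp add: All_less_Suc2 del: All_less_Suc)
    apply blast
    done
  then show ?case using 3 by simp
qed

lemma trl_append: "trl A (xs @ y # ys) = (trl A (xs @ [y]) \<and> trl A (y # ys))"
proof (induction xs)
  case Nil
  then show ?case by (cases ys) auto
next
  case (Cons a xs)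
  then show ?case by (cases xs) auto
qed

lemma trl_snoc_relab: "k < 3 \<Longrightarrow> k' < 3 \<Longrightarrow> trl A (xs @ [(t,k)]) = trl A (xs @ [(t,k')])"
proof (induction xs)
  case Nil then show ?case by simp
next
  case (Cons a xs) then show ?case by (cases xs) auto
qed

lemma trl_nonempty: "trl A p \<Longrightarrow> p \<noteq> []" by auto

lemma trl_relab: "trl A p \<Longrightarrow> l < 3 \<Longrightarrow> trl A (relab p l)"
proof -
  assume a: "trl A p" "l < 3"
  then have "p = butlast p @ [(fst (last p), snd (last p))]" by (cases p rule: rev_cases) auto
  moreover have "snd (last p) < 3"
  proof -
    have "trl A (butlast p @ [last p] @ [])" using a calculation by simp
    then have "trl A [last p]" using trl_append[of A "butlast p" "last p" "[]"] by simp
    then show ?thesis by simp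
  qed
  ultimately show ?thesis using a trl_snoc_relab[of l "snd (last p)" A "butlast p" "fst (last p)"]
    unfolding relab_def by simp
qed

lemma trl_SB: "trl A p \<Longrightarrow> x \<in> set p \<Longrightarrow> fst x \<in> SB A \<and> snd x < 3"
  by (induction A p rule: trl.induct) auto

lemma step_trl: "trail_step A p q \<Longrightarrow> trl A p \<and> trl A q"
  by (induction rule: trail_step.induct) (auto simp: is_trail_trl)

lemma eq_trl: "trail_eq A p q \<Longrightarrow> trl A p \<and> trl A q"
  by (induction rule: trail_eq.induct) (auto simp: is_trail_trl dest: step_trl)


definition icl :: "'a ra_sig \<Rightarrow> 'a tri \<Rightarrow> nat \<Rightarrow> nat set" where
  "icl A t k = {j. j < 3 \<and> t \<in> SE A k j}"

fun push :: "('t \<times> nat) list \<Rightarrow> 't \<Rightarrow> nat \<Rightarrow> 't \<Rightarrow> ('t \<times> nat) list" where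
  "push [] t k t' = [(t,k)]"
| "push ((a,l)#st) t k t' = (if a = t' \<and> l = k then st else (t,k)#(a,l)#st)"

fun go :: "('t \<times> nat) list \<Rightarrow> ('t \<times> nat) list \<Rightarrow> ('t \<times> nat) list \<times> 't \<times> nat" where
  "go st [] = (st, undefined, 0)"
| "go st [x] = (st, fst x, snd x)"
| "go st (x#y#r) = go (push st (fst x) (snd x) (fst y)) (y#r)"

fun climb :: "'a ra_sig \<Rightarrow> ('a tri \<times> nat) list \<Rightarrow> 'a tri \<Rightarrow> nat set \<Rightarrow> ('a tri \<times> nat) list \<times> 'a tri \<times> nat set" where
  "climb A [] t I = ([], t, I)"
| "climb A ((a,l)#st) t I = (if (\<exists>v\<in>I. v \<noteq> l) then climb A st a (icl A a (SOME v. v\<in>I \<and> v\<noteq>l)) else ((a,l)#st, t, I))"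

definition pt :: "'a ra_sig \<Rightarrow> 'a trail \<Rightarrow> ('a tri \<times> nat) list \<times> 'a tri \<times> nat set" where
  "pt A q = (case go [] q of (st, t, k) \<Rightarrow> climb A st t (icl A t k))"

fun red :: "('t \<times> nat) list \<Rightarrow> 't \<Rightarrow> bool" where
  "red [] c = True"
| "red [x] c = True"
| "red ((a,l)#(b,l')#st) c = (\<not>(b = c \<and> l' = l) \<and> red ((b,l')#st) a)"

fun vst :: "'a ra_sig \<Rightarrow> ('a tri \<times> nat) list \<Rightarrow> 'a tri \<Rightarrow> bool" where
  "vst A [] c = (c \<in> SB A)"
| "vst A ((a,l)#st) c = ((a,c) \<in> ST A l \<and> l < 3 \<and> vst A st a)"

lemma go_Cons: "go st (x # r) = (if r = [] then (st, fst x, snd x) else go (push st (fst x) (snd x) (fst (hd r))) r)"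
  by (cases r) auto

lemma push_push: "red st t \<Longrightarrow> push (push st t l s) s l t = st"
proof (cases st)
  case (Cons x st')
  assume r: "red st t"
  then show ?thesis using Cons by (cases x; cases st') auto
qed simp

lemma red_tl: "red (x#st) c \<Longrightarrow> red st (fst x)"
  by (cases x; cases st) auto

lemma red_push: "red st t \<Longrightarrow> red (push st t k t') t'"
proof (cases st)
  case Nil then show ?thesis by simp
next
  case (Cons x st')
  assume r: "red st t"
  obtain a l where x: "x = (a,l)" by (cases x)
  show ?thesis
  proof (cases "a = t' \<and> l = k")
    case True then show ?thesis using r Cons x red_tl[of x st' t] by auto
  next
    case False then show ?thesis using r Cons x by auto
  qed
qed

lemma vst_push: "vst A st t \<Longrightarrow> (t,t') \<in> ST A k \<Longrightarrow> k < 3 \<Longrightarrow> vst A (push st t k t') t'"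
proof (cases st)
  case Nil
  assume "vst A st t" "(t,t') \<in> ST A k" "k < 3"
  then show ?thesis using Nil by (simp add: ST_def)
next
  case (Cons x st')
  assume v: "vst A st t" "(t,t') \<in> ST A k" "k < 3"
  obtain a l where x: "x = (a,l)" by (cases x)
  show ?thesis
  proof (cases "a = t' \<and> l = k")
    case True then show ?thesis using v Cons x by auto
  next
    case False then show ?thesis using v Cons x by auto
  qed
qed

lemma go_inv: "trl A (x#r) \<Longrightarrow> red st (fst x) \<Longrightarrow> vst A st (fst x) \<Longrightarrow>
   go st (x#r) = (S, t, k) \<Longrightarrow> red S t \<and> vst A S t \<and> t = fst (last (x#r)) \<and> k = snd (last (x#r))"
proof (induction r arbitrary: x st)
  case Nil then show ?case by auto
next
  case (Cons y r)
  have "go st (x#y#r) = go (push st (fst x) (snd x) (fst y)) (y#r)" by simp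
  moreover have "red (push st (fst x) (snd x) (fst y)) (fst y)" using red_push[OF Cons.prems(2)] .
  moreover have "vst A (push st (fst x) (snd x) (fst y)) (fst y)"
  proof -
    have tr: "(fst x, fst y) \<in> ST A (snd x)" "snd x < 3" using Cons.prems(1) by auto
    show ?thesis using vst_push[OF Cons.prems(3) tr] .
  qed
  moreover have "trl A (y#r)" using Cons.prems(1) by simp
  ultimately have g: "go (push st (fst x) (snd x) (fst y)) (y#r) = (S,t,k)"
    and rv: "red (push st (fst x) (snd x) (fst y)) (fst y)" "vst A (push st (fst x) (snd x) (fst y)) (fst y)"
    and tl: "trl A (y#r)" using Cons.prems(4) by auto
  have "red S t \<and> vst A S t \<and> t = fst (last (y#r)) \<and> k = snd (last (y#r))"
    using Cons.IH[OF tl rv g] .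
  moreover have "last (x#y#r) = last (y#r)" by simp
  ultimately show ?case by metis
qed

lemma go_A: "red st (fst (hd (xs @ [(t,l)]))) \<Longrightarrow>
  go st (xs @ [(t,l),(s,l),(t,k)] @ ys) = go st (xs @ [(t,k)] @ ys)"
proof (induction xs arbitrary: st)
  case Nil
  then have "red st t" by simp
  then show ?case by (simp add: push_push)
next
  case (Cons x xs)
  have h: "red (push st (fst x) (snd x) (fst (hd (xs @ [(t,l)])))) (fst (hd (xs @ [(t,l)])))"
    using Cons.prems red_push by simp
  have e1: "fst (hd (xs @ [(t,l),(s,l),(t,k)] @ ys)) = fst (hd (xs @ [(t,l)]))" by (cases xs) auto
  have e2: "fst (hd (xs @ [(t,k)] @ ys)) = fst (hd (xs @ [(t,l)]))" by (cases xs) auto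
  show ?case
    apply (simp only: append_Cons)
    apply (subst go_Cons, subst go_Cons)
    using Cons.IH[OF h] e1 e2 by simp
qed

lemma go_snoc: "go st (xs @ [(t,k)]) = (fst (go st (xs @ [(t,k')])), t, k)"
proof (induction xs arbitrary: st)
  case Nil then show ?case by simp
next
  case (Cons x xs)
  have e: "fst (hd (xs @ [(t,k)])) = fst (hd (xs @ [(t,k')]))" by (cases xs) auto
  show ?case
    apply (simp only: append_Cons)
    apply (subst go_Cons, subst go_Cons)
    using Cons.IH e by simp
qed

lemma go_snoc2: "go st (xs @ [(t,l),(s,v)]) = (push (fst (go st (xs @ [(t,l)]))) t l s, s, v)"
proof (induction xs arbitrary: st)
  case Nil then show ?case by simp
next
  case (Cons x xs)
  have e: "fst (hd (xs @ [(t,l),(s,v)])) = fst (hd (xs @ [(t,l)]))" by (cases xs) auto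
  show ?case
    apply (simp only: append_Cons)
    apply (subst go_Cons, subst go_Cons)
    using Cons.IH e by simp
qed


context wal begin

declare climb.simps(2)[simp del]

lemma icl_sub: "j \<in> icl A t k \<Longrightarrow> j < 3" unfolding icl_def by simp
lemma icl_refl: "t \<in> SB A \<Longrightarrow> k < 3 \<Longrightarrow> k \<in> icl A t k" unfolding icl_def using SE_refl by simp
lemma icl_mem: "j \<in> icl A t k \<longleftrightarrow> j < 3 \<and> t \<in> SE A k j" unfolding icl_def by simp

lemma icl_eq: "t \<in> SB A \<Longrightarrow> k < 3 \<Longrightarrow> j \<in> icl A t k \<Longrightarrow> icl A t j = icl A t k"
proof -
  assume h: "t \<in> SB A" "k < 3" "j \<in> icl A t k"
  have j: "j < 3" "t \<in> SE A k j" using h(3) icl_mem by auto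
  have jk: "t \<in> SE A j k" using j(2) SE_sym by blast
  show ?thesis
  proof (rule set_eqI)
    fix x
    show "x \<in> icl A t j \<longleftrightarrow> x \<in> icl A t k"
      unfolding icl_mem using SE_trans[OF jk _ j(1) h(2)] SE_trans[OF j(2) _ h(2) j(1)] by blast
  qed
qed

lemma icl_transfer: "s \<in> SB A \<Longrightarrow> t \<in> SB A \<Longrightarrow> tr s l = tr t l \<Longrightarrow> l < 3 \<Longrightarrow> v < 3 \<Longrightarrow> v \<noteq> l \<Longrightarrow>
  w \<noteq> l \<Longrightarrow> w \<in> icl A s v \<Longrightarrow> w \<in> icl A t v"
proof -
  assume h: "s \<in> SB A" "t \<in> SB A" "tr s l = tr t l" "l < 3" "v < 3" "v \<noteq> l" "w \<noteq> l" "w \<in> icl A s v"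
  have w: "w < 3" "s \<in> SE A v w" using h(8) icl_mem by auto
  show ?thesis
  proof (cases "v = w")
    case True then show ?thesis using icl_refl h by simp
  next
    case False
    then have "3 - v - w = l" using h w by auto
    then show ?thesis using w False h SE_char unfolding icl_mem by auto
  qed
qed

lemma ST_E: "(a, t) \<in> ST A l \<Longrightarrow> a \<in> SB A \<and> t \<in> SB A \<and> tr a l = tr t l"
  unfolding ST_def by simp

lemma vst_SB: "vst A st t \<Longrightarrow> t \<in> SB A"
  by (cases st) (auto dest: ST_E)

lemma climb_up: "vst A ((a,l)#st) t \<Longrightarrow> i < 3 \<Longrightarrow> v \<in> icl A t i \<Longrightarrow> v \<noteq> l \<Longrightarrow>
  climb A ((a,l)#st) t (icl A t i) = climb A st a (icl A a v)"
proof -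
  assume h: "vst A ((a,l)#st) t" "i < 3" "v \<in> icl A t i" "v \<noteq> l"
  have at: "(a,t) \<in> ST A l" "l < 3" "vst A st a" using h(1) by auto
  have S: "a \<in> SB A" "t \<in> SB A" "tr a l = tr t l" using ST_E[OF at(1)] by auto
  have ex: "\<exists>w\<in>icl A t i. w \<noteq> l" using h by blast
  define w where "w = (SOME w. w \<in> icl A t i \<and> w \<noteq> l)"
  have w: "w \<in> icl A t i" "w \<noteq> l" unfolding w_def using someI_ex[of "\<lambda>w. w \<in> icl A t i \<and> w \<noteq> l"] ex by auto
  have v3: "v < 3" using h(3) icl_sub by blast
  have w3: "w < 3" using w(1) icl_sub by blast
  have e1: "icl A t w = icl A t i" using icl_eq[OF S(2) h(2) w(1)] .
  have e2: "icl A t v = icl A t i" using icl_eq[OF S(2) h(2) h(3)] .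
  have "w \<in> icl A t v" using w(1) e2 by simp
  then have "w \<in> icl A a v" using icl_transfer[OF S(2) S(1) S(3)[symmetric] at(2) v3 h(4) w(2)] by simp
  then have "icl A a w = icl A a v" using icl_eq[OF S(1) v3] by simp
  then show ?thesis using ex unfolding w_def by (simp add: climb.simps(2))
qed

lemma climb_stay: "\<not>(\<exists>v\<in>I. v \<noteq> l) \<Longrightarrow> climb A ((a,l)#st) t I = ((a,l)#st, t, I)"
  by (simp add: climb.simps(2))

lemma climb_len: "length (fst (climb A' st t I)) \<le> length st"
proof (induction A' st t I rule: climb.induct)
  case (1 A t I) then show ?case by simp
next
  case (2 A a l st t I)
  show ?case
  proof (cases "\<exists>v\<in>I. v \<noteq> l")
    case True then show ?thesis using 2 le_SucI by (simp add: climb.simps(2))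
  next
    case False then show ?thesis by (simp add: climb.simps(2))
  qed
qed

lemma climb_push:
  assumes "red S t" "vst A S t" "(t,s) \<in> ST A l" "l < 3" "v < 3" "v \<noteq> l"
  shows "climb A (push S t l s) s (icl A s v) = climb A S t (icl A t v)"
proof (cases S)
  case Nil
  have "vst A [(t,l)] s" using assms Nil ST_E by auto
  then show ?thesis using climb_up[of t l "[]" s v v] Nil assms icl_refl ST_E by auto
next
  case (Cons x S'')
  obtain a l' where x: "x = (a,l')" by (cases x)
  show ?thesis
  proof (cases "a = s \<and> l' = l")
    case True
    then have p: "push S t l s = S''" using Cons x by simp
    have "climb A S t (icl A t v) = climb A S'' s (icl A s v)"
      using climb_up[of s l S'' t v v] assms Cons x True icl_refl vst_SB by auto
    then show ?thesis using p by simp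
  next
    case False
    then have p: "push S t l s = (t,l)#S" using Cons x by auto
    have vv: "vst A ((t,l)#S) s" using assms by simp
    have "climb A ((t,l)#S) s (icl A s v) = climb A S t (icl A t v)"
      using climb_up[OF vv assms(5) _ assms(6)] icl_refl ST_E assms by blast
    then show ?thesis using p by simp
  qed
qed

lemma climb_vst: "vst A st t \<Longrightarrow> climb A st t I = (S', r, I') \<Longrightarrow> vst A S' r"
  by (induction A st t I rule: climb.induct) (auto split: if_splits simp: climb.simps(2))

lemma climb_cls: "vst A st t \<Longrightarrow> i < 3 \<Longrightarrow> \<exists>i'. i' < 3 \<and> snd (snd (climb A st t (icl A t i))) = icl A (fst (snd (climb A st t (icl A t i)))) i'"
proof (induction st arbitrary: t i)
  case Nil then show ?case by auto
next
  case (Cons x st)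
  obtain a l where x: "x = (a,l)" by (cases x)
  show ?case
  proof (cases "\<exists>v\<in>icl A t i. v \<noteq> l")
    case True
    then obtain v where v: "v \<in> icl A t i" "v \<noteq> l" by blast
    have vx: "vst A ((a,l)#st) t" using Cons.prems(1) x by simp
    have e: "climb A ((a,l)#st) t (icl A t i) = climb A st a (icl A a v)"
      by (rule climb_up[OF vx Cons.prems(2) v])
    have "vst A st a" using Cons.prems x by simp
    moreover have "v < 3" using v icl_sub by blast
    ultimately show ?thesis using Cons.IH e x by metis
  next
    case False
    then show ?thesis using x Cons.prems climb_stay by auto
  qed
qed

lemma climb_inj: "vst A st t \<Longrightarrow> i < 3 \<Longrightarrow> j < 3 \<Longrightarrow> climb A st t (icl A t i) = climb A st t (icl A t j) \<Longrightarrow>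
  icl A t i = icl A t j"
proof (induction st arbitrary: t i j)
  case Nil then show ?case by simp
next
  case (Cons x st)
  obtain a l where x: "x = (a,l)" by (cases x)
  have at: "(a,t) \<in> ST A l" "l < 3" "vst A st a" using Cons.prems(1) x by auto
  have S: "a \<in> SB A" "t \<in> SB A" "tr a l = tr t l" using ST_E[OF at(1)] by auto
  have vx: "vst A ((a,l)#st) t" using Cons.prems(1) x by simp
  have pr: "climb A ((a,l)#st) t (icl A t i) = climb A ((a,l)#st) t (icl A t j)" using Cons.prems(4) x by simp
  consider (both) "\<exists>v\<in>icl A t i. v \<noteq> l" "\<exists>w\<in>icl A t j. w \<noteq> l"
    | (one) "\<exists>v\<in>icl A t i. v \<noteq> l" "\<not>(\<exists>w\<in>icl A t j. w \<noteq> l)"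
    | (two) "\<not>(\<exists>v\<in>icl A t i. v \<noteq> l)" "\<exists>w\<in>icl A t j. w \<noteq> l"
    | (none) "\<not>(\<exists>v\<in>icl A t i. v \<noteq> l)" "\<not>(\<exists>w\<in>icl A t j. w \<noteq> l)" by blast
  then show ?case
  proof cases
    case both
    then obtain v w where v: "v \<in> icl A t i" "v \<noteq> l" and w: "w \<in> icl A t j" "w \<noteq> l" by blast
    have v3: "v < 3" and w3: "w < 3" using v w icl_sub by auto
    have "climb A st a (icl A a v) = climb A st a (icl A a w)"
      using climb_up[OF vx Cons.prems(2) v] climb_up[OF vx Cons.prems(3) w] pr by simp
    then have "icl A a v = icl A a w" using Cons.IH[OF at(3) v3 w3] by simp
    then have "w \<in> icl A a v" using icl_refl[OF S(1) w3] by simp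
    then have "w \<in> icl A t v" using icl_transfer[OF S(1) S(2) S(3) at(2) v3 v(2) w(2)] by simp
    then have "icl A t w = icl A t v" using icl_eq[OF S(2) v3] by simp
    moreover have "icl A t v = icl A t i" using icl_eq[OF S(2) Cons.prems(2) v(1)] .
    moreover have "icl A t w = icl A t j" using icl_eq[OF S(2) Cons.prems(3) w(1)] .
    ultimately show ?thesis by simp
  next
    case one
    then obtain v where v: "v \<in> icl A t i" "v \<noteq> l" by blast
    have "length (fst (climb A ((a,l)#st) t (icl A t i))) \<le> length st"
      using climb_up[OF vx Cons.prems(2) v] climb_len[of A st a "icl A a v"] by simp
    moreover have "climb A ((a,l)#st) t (icl A t j) = ((a,l)#st, t, icl A t j)" using one climb_stay by simp
    ultimately show ?thesis using pr by simp
  next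
    case two
    then obtain w where w: "w \<in> icl A t j" "w \<noteq> l" by blast
    have "length (fst (climb A ((a,l)#st) t (icl A t j))) \<le> length st"
      using climb_up[OF vx Cons.prems(3) w] climb_len[of A st a "icl A a w"] by simp
    moreover have "climb A ((a,l)#st) t (icl A t i) = ((a,l)#st, t, icl A t i)" using two climb_stay by simp
    ultimately show ?thesis using pr by simp
  next
    case none
    then show ?thesis using pr climb_stay by simp
  qed
qed

lemma joint: "vst A st t \<Longrightarrow> i < 3 \<Longrightarrow> j < 3 \<Longrightarrow> climb A st t (icl A t i) = (Sa, ra, Ia) \<Longrightarrow>
  climb A st t (icl A t j) = (Sb, rb, Ib) \<Longrightarrow> length Sb \<le> length Sa \<Longrightarrow>
  \<exists>i' j'. i' < 3 \<and> j' < 3 \<and> Ia = icl A ra i' \<and> climb A Sa ra (icl A ra j') = (Sb, rb, Ib) \<and>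
     Lb t i j = Lb ra i' j' \<and> vst A Sa ra"
proof (induction st arbitrary: t i j)
  case Nil then show ?case by auto
next
  case (Cons x st)
  obtain a l where x: "x = (a,l)" by (cases x)
  have at: "(a,t) \<in> ST A l" "l < 3" "vst A st a" using Cons.prems(1) x by auto
  have S: "a \<in> SB A" "t \<in> SB A" "tr a l = tr t l" using ST_E[OF at(1)] by auto
  have vx: "vst A ((a,l)#st) t" using Cons.prems(1) x by simp
  have pa: "climb A ((a,l)#st) t (icl A t i) = (Sa, ra, Ia)" using Cons.prems(4) x by simp
  have pb: "climb A ((a,l)#st) t (icl A t j) = (Sb, rb, Ib)" using Cons.prems(5) x by simp
  show ?case
  proof (cases "\<exists>v\<in>icl A t i. v \<noteq> l")
    case True
    then obtain v where v: "v \<in> icl A t i" "v \<noteq> l" by blast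
    have v3: "v < 3" using v icl_sub by blast
    have ca: "climb A st a (icl A a v) = (Sa, ra, Ia)"
      using climb_up[OF vx Cons.prems(2) v] pa by simp
    have la: "length Sa \<le> length st" using climb_len[of A st a "icl A a v"] ca by simp
    have "\<exists>w\<in>icl A t j. w \<noteq> l"
    proof (rule ccontr)
      assume "\<not> (\<exists>w\<in>icl A t j. w \<noteq> l)"
      then have "Sb = (a,l)#st" using pb climb_stay by simp
      then show False using la Cons.prems(6) by simp
    qed
    then obtain w where w: "w \<in> icl A t j" "w \<noteq> l" by blast
    have w3: "w < 3" using w icl_sub by blast
    have cb: "climb A st a (icl A a w) = (Sb, rb, Ib)"
      using climb_up[OF vx Cons.prems(3) w] pb by simp
    obtain i' j' where ij: "i' < 3" "j' < 3" "Ia = icl A ra i'" "climb A Sa ra (icl A ra j') = (Sb, rb, Ib)"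
      "Lb a v w = Lb ra i' j'" "vst A Sa ra"
      using Cons.IH[OF at(3) v3 w3 ca cb Cons.prems(6)] by blast
    have "Lb t i j = Lb t v j" using R1[OF S(2) Cons.prems(2) v3 Cons.prems(3)] v(1) icl_mem by blast
    also have "\<dots> = Lb t v w" using R1[OF S(2) Cons.prems(3) w3 v3] w(1) icl_mem by blast
    also have "\<dots> = Lb a v w" using R2[OF S(1) S(2) at(2) S(3) v3 w3 v(2) w(2)] by simp
    finally show ?thesis using ij by metis
  next
    case False
    then have e: "Sa = (a,l)#st" "ra = t" "Ia = icl A t i" using pa climb_stay by auto
    then show ?thesis using pb vx Cons.prems(2,3) by auto
  qed
qed

lemma go_vst: "trl A p \<Longrightarrow> red (fst (go [] p)) (fst (last p)) \<and> vst A (fst (go [] p)) (fst (last p))"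
proof -
  assume p: "trl A p"
  obtain x r where xr: "p = x # r" using p by (cases p) auto
  obtain S t k where g: "go [] p = (S, t, k)" by (cases "go [] p") auto
  have "fst x \<in> SB A" using p xr by (cases r) auto
  moreover have p': "trl A (x#r)" using p xr by simp
  moreover have g': "go [] (x#r) = (S,t,k)" using g xr by simp
  moreover have r0: "red [] (fst x)" by simp
  ultimately have gi: "red S t \<and> vst A S t \<and> t = fst (last (x#r)) \<and> k = snd (last (x#r))"
    using go_inv[of A x r "[]" S t k] by (simp only: vst.simps)
  have e1: "fst (go [] p) = S" using g by simp
  have e2: "fst (last p) = t" using gi xr by metis
  show ?thesis unfolding e1 e2 using gi by blast
qed

lemma pt_relab: "trl A p \<Longrightarrow> pt A (relab p l) = climb A (fst (go [] p)) (fst (last p)) (icl A (fst (last p)) l)"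
proof -
  assume p: "trl A p"
  have "p = butlast p @ [(fst (last p), snd (last p))]" using p by (cases p rule: rev_cases) auto
  then have "go [] (relab p l) = (fst (go [] p), fst (last p), l)"
    unfolding relab_def using go_snoc[of "[]" "butlast p" "fst (last p)" l "snd (last p)"] by metis
  then show ?thesis unfolding pt_def by simp
qed

lemma step_pt: "trail_step A p q \<Longrightarrow> pt A p = pt A q"
proof (induction rule: trail_step.induct)
  case (ruleA xs t l s k ys)
  then show ?case unfolding pt_def using go_A[of "[]" xs t l s k ys] by simp
next
  case (ruleB xs t l s v)
  have "trl A (xs @ [(t,l),(s,v)])" using ruleB(1) by (simp add: is_trail_trl)
  then have tp: "trl A (xs @ (t,l) # [(s,v)])" by simp
  then have t1: "trl A (xs @ [(t,l)])" and t2: "trl A [(t,l),(s,v)]"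
    using trl_append[of A xs "(t,l)" "[(s,v)]"] by auto
  have st: "(t,s) \<in> ST A l" "l < 3" "v < 3" using t2 by auto
  define S where "S = fst (go [] (xs @ [(t,l)]))"
  have rv: "red S t" "vst A S t" using go_vst[OF t1] unfolding S_def by auto
  have g1: "go [] (xs @ [(t,l),(s,v)]) = (push S t l s, s, v)" unfolding S_def by (rule go_snoc2)
  have g2: "go [] (xs @ [(t,v)]) = (S, t, v)" unfolding S_def by (rule go_snoc)
  have lv: "v \<noteq> l" using ruleB(3) by simp
  show ?case unfolding pt_def g1 g2 using climb_push[OF rv st(1) st(2) st(3) lv] by simp
next
  case (ruleC xs t l k)
  have tp: "trl A (xs @ [(t,l)])" using ruleC(1) by (simp add: is_trail_trl)
  have tk: "trl A (xs @ [(t,k)])" using ruleC(2) by (simp add: is_trail_trl)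
  have "trl A [(t,l)]" "trl A [(t,k)]" using trl_append[of A xs "(t,l)" "[]"] trl_append[of A xs "(t,k)" "[]"] tp tk by auto
  then have tl: "t \<in> SB A" "l < 3" "k < 3" by auto
  have "k \<in> icl A t l" using ruleC(3) tl icl_mem by simp
  then have e: "icl A t k = icl A t l" using icl_eq tl by blast
  define S where "S = fst (go [] (xs @ [(t,l)]))"
  have g1: "go [] (xs @ [(t,l)]) = (S, t, l)" unfolding S_def by (rule go_snoc)
  have g2: "go [] (xs @ [(t,k)]) = (S, t, k)" unfolding S_def by (rule go_snoc)
  show ?case unfolding pt_def g1 g2 using e by simp
qed

lemma eq_pt: "trail_eq A p q \<Longrightarrow> pt A p = pt A q"
  by (induction rule: trail_eq.induct) (auto dest: step_pt)

lemma N3: "trl A p \<Longrightarrow> k < 3 \<Longrightarrow> l < 3 \<Longrightarrow> pt A (relab p k) = pt A (relab p l) \<Longrightarrow> fst (last p) \<in> SE A k l"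
proof -
  assume h: "trl A p" "k < 3" "l < 3" "pt A (relab p k) = pt A (relab p l)"
  have v: "vst A (fst (go [] p)) (fst (last p))" using go_vst h by blast
  have "icl A (fst (last p)) k = icl A (fst (last p)) l"
    using climb_inj[OF v h(2) h(3)] h(4) pt_relab[OF h(1)] by simp
  then have "l \<in> icl A (fst (last p)) k" using icl_refl vst_SB[OF v] h by simp
  then show ?thesis using icl_mem by simp
qed

lemma N2_aux: "vst A S t \<Longrightarrow> vst A S' t' \<Longrightarrow> i < 3 \<Longrightarrow> j < 3 \<Longrightarrow>
  climb A S t (icl A t i) = climb A S' t' (icl A t' i) \<Longrightarrow>
  climb A S t (icl A t j) = climb A S' t' (icl A t' j) \<Longrightarrow>
  length (fst (climb A S t (icl A t j))) \<le> length (fst (climb A S t (icl A t i))) \<Longrightarrow>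
  Lb t i j = Lb t' i j"
proof -
  assume h: "vst A S t" "vst A S' t'" "i < 3" "j < 3"
    "climb A S t (icl A t i) = climb A S' t' (icl A t' i)"
    "climb A S t (icl A t j) = climb A S' t' (icl A t' j)"
    "length (fst (climb A S t (icl A t j))) \<le> length (fst (climb A S t (icl A t i)))"
  obtain Sa ra Ia where a: "climb A S t (icl A t i) = (Sa, ra, Ia)" by (cases "climb A S t (icl A t i)") auto
  obtain Sb rb Ib where b: "climb A S t (icl A t j) = (Sb, rb, Ib)" by (cases "climb A S t (icl A t j)") auto
  have len: "length Sb \<le> length Sa" using h(7) a b by simp
  obtain i1 j1 where p: "i1 < 3" "j1 < 3" "Ia = icl A ra i1" "climb A Sa ra (icl A ra j1) = (Sb, rb, Ib)"
      "Lb t i j = Lb ra i1 j1" "vst A Sa ra"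
    using joint[OF h(1) h(3) h(4) a b len] by blast
  obtain i2 j2 where q: "i2 < 3" "j2 < 3" "Ia = icl A ra i2" "climb A Sa ra (icl A ra j2) = (Sb, rb, Ib)"
      "Lb t' i j = Lb ra i2 j2"
    using joint[OF h(2) h(3) h(4) a[unfolded h(5)] b[unfolded h(6)] len] by blast
  have raS: "ra \<in> SB A" using vst_SB p(6) by blast
  have "icl A ra j1 = icl A ra j2" using climb_inj[OF p(6) p(2) q(2)] p(4) q(4) by simp
  then have j: "j2 \<in> icl A ra j1" using icl_refl[OF raS q(2)] by simp
  have i: "i2 \<in> icl A ra i1" using icl_refl[OF raS q(1)] p(3) q(3) by simp
  have "Lb ra i1 j1 = Lb ra i2 j1" using R1[OF raS p(1) q(1) p(2)] i icl_mem by blast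
  also have "\<dots> = Lb ra i2 j2" using R1[OF raS p(2) q(2) q(1)] j icl_mem by blast
  finally show ?thesis using p(5) q(5) by simp
qed

lemma N2: "trl A p \<Longrightarrow> trl A q \<Longrightarrow> i < 3 \<Longrightarrow> j < 3 \<Longrightarrow> i \<noteq> j \<Longrightarrow>
  pt A (relab p i) = pt A (relab q i) \<Longrightarrow> pt A (relab p j) = pt A (relab q j) \<Longrightarrow>
  tr (fst (last p)) (3-i-j) = tr (fst (last q)) (3-i-j)"
proof -
  assume h: "trl A p" "trl A q" "i < 3" "j < 3" "i \<noteq> j"
    "pt A (relab p i) = pt A (relab q i)" "pt A (relab p j) = pt A (relab q j)"
  define S where "S = fst (go [] p)"
  define t where "t = fst (last p)"
  define S' where "S' = fst (go [] q)"
  define t' where "t' = fst (last q)"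
  have v: "vst A S t" unfolding S_def t_def using go_vst h by blast
  have v': "vst A S' t'" unfolding S'_def t'_def using go_vst h by blast
  have ei: "climb A S t (icl A t i) = climb A S' t' (icl A t' i)"
    using h(6) pt_relab[OF h(1)] pt_relab[OF h(2)] unfolding S_def t_def S'_def t'_def by simp
  have ej: "climb A S t (icl A t j) = climb A S' t' (icl A t' j)"
    using h(7) pt_relab[OF h(1)] pt_relab[OF h(2)] unfolding S_def t_def S'_def t'_def by simp
  have tS: "t \<in> SB A" "t' \<in> SB A" using vst_SB v v' by auto
  show ?thesis
  proof (cases "length (fst (climb A S t (icl A t j))) \<le> length (fst (climb A S t (icl A t i)))")
    case True
    have "Lb t i j = Lb t' i j" using N2_aux[OF v v' h(3) h(4) ei ej True] .
    then show ?thesis using Lb_coord[OF tS h(3) h(4) h(5)] unfolding t_def t'_def by simp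
  next
    case False
    have "Lb t j i = Lb t' j i" using N2_aux[OF v v' h(4) h(3) ej ei] False by simp
    then have "tr t (3-j-i) = tr t' (3-j-i)" using Lb_coord[OF tS h(4) h(3)] h(5) by simp
    moreover have "3-j-i = 3-i-j" by simp
    ultimately show ?thesis unfolding t_def t'_def by simp
  qed
qed

end

fun revw :: "('t \<times> nat) list \<Rightarrow> ('t \<times> nat) list" where
  "revw [] = []"
| "revw [x] = []"
| "revw (x#y#r) = revw (y#r) @ [(fst y, snd x)]"

lemma ST_sym: "(a,b) \<in> ST A k \<Longrightarrow> (b,a) \<in> ST A k" unfolding ST_def by auto

lemma trl_join: "trl A (xs @ [(a,l)]) \<Longrightarrow> trl A ((a,l')#ys) \<Longrightarrow> trl A (xs @ (a,l')#ys)"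
proof -
  assume h: "trl A (xs @ [(a,l)])" "trl A ((a,l')#ys)"
  have "l < 3" using trl_append[of A xs "(a,l)" "[]"] h(1) by simp
  moreover have "l' < 3" using h(2) by (cases ys) auto
  ultimately have "trl A (xs @ [(a,l')])" using trl_snoc_relab h(1) by blast
  then show ?thesis using h(2) trl_append by blast
qed

lemma trl_A_small: "trl A (xs @ [(t,l),(s,l),(t,k)] @ ys) \<Longrightarrow> trl A (xs @ [(t,k)] @ ys)"
proof -
  assume h: "trl A (xs @ [(t,l),(s,l),(t,k)] @ ys)"
  have h': "trl A (xs @ (t,l) # ((s,l) # (t,k) # ys))" using h by simp
  have a: "trl A (xs @ [(t,l)])" using trl_append[of A xs "(t,l)"] h' by blast
  have b: "trl A ((t,l) # (s,l) # (t,k) # ys)" using trl_append[of A xs "(t,l)"] h' by blast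
  then have c: "trl A ((t,k) # ys)" by simp
  show ?thesis using trl_join[OF a c] by simp
qed

lemma step_A: "trl A (xs @ [(t,l),(s,l),(t,k)] @ ys) \<Longrightarrow> trail_eq A (xs @ [(t,l),(s,l),(t,k)] @ ys) (xs @ [(t,k)] @ ys)"
proof -
  assume h: "trl A (xs @ [(t,l),(s,l),(t,k)] @ ys)"
  have h2: "trl A (xs @ [(t,k)] @ ys)" using trl_A_small[OF h] .
  have "trail_step A (xs @ [(t,l),(s,l),(t,k)] @ ys) (xs @ [(t,k)] @ ys)"
    by (rule ruleA) (simp_all only: is_trail_trl h h2)
  then show ?thesis by (rule te_step)
qed

lemma eq_refl': "trl A p \<Longrightarrow> trail_eq A p p" by (rule te_refl) (simp add: is_trail_trl)

lemma cancel1: "trl A q \<Longrightarrow> trl A (Z @ revw q @ butlast q @ (fst (last q), k) # Y) \<Longrightarrow>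
  trail_eq A (Z @ revw q @ butlast q @ (fst (last q), k) # Y) (Z @ (fst (last q), k) # Y)"
proof (induction q arbitrary: Z rule: revw.induct)
  case 1 then show ?case by simp
next
  case (2 x) then show ?case using eq_refl' by simp
next
  case (3 x y r)
  have "\<exists>k' B. butlast (y#r) @ (fst (last (y#r)), k) # Y = (fst y, k') # B"
  proof (cases r)
    case Nil then show ?thesis by simp
  next
    case (Cons z r')
    then show ?thesis by (intro exI[of _ "snd y"] exI[of _ "butlast r @ (fst (last (y#r)), k) # Y"]) simp
  qed
  then obtain k' B where B: "butlast (y#r) @ (fst (last (y#r)), k) # Y = (fst y, k') # B" by blast
  have e1: "Z @ revw (x#y#r) @ butlast (x#y#r) @ (fst (last (x#y#r)), k) # Y
      = (Z @ revw (y#r)) @ [(fst y, snd x), (fst x, snd x), (fst y, k')] @ B"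
    using B by simp
  have e2: "(Z @ revw (y#r)) @ [(fst y, k')] @ B = Z @ revw (y#r) @ butlast (y#r) @ (fst (last (y#r)), k) # Y"
    using B by simp
  have t1: "trl A ((Z @ revw (y#r)) @ [(fst y, snd x), (fst x, snd x), (fst y, k')] @ B)"
    using 3(3) e1 by simp
  have s1: "trail_eq A ((Z @ revw (y#r)) @ [(fst y, snd x), (fst x, snd x), (fst y, k')] @ B)
     ((Z @ revw (y#r)) @ [(fst y, k')] @ B)" using step_A[OF t1] .
  have t2: "trl A (Z @ revw (y#r) @ butlast (y#r) @ (fst (last (y#r)), k) # Y)"
    using trl_A_small[OF t1] e2 by simp
  have ty: "trl A (y#r)" using 3(2) by simp
  have s2: "trail_eq A (Z @ revw (y#r) @ butlast (y#r) @ (fst (last (y#r)), k) # Y) (Z @ (fst (last (y#r)), k) # Y)"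
    using 3(1)[OF ty t2] .
  show ?case using te_trans[OF s1[unfolded e2] s2] e1 by simp
qed

lemma revw_snoc: "q \<noteq> [] \<Longrightarrow> revw (q @ [z]) = (fst z, snd (last q)) # revw q"
proof (induction q rule: revw.induct)
  case 1 then show ?case by simp
next
  case (2 x) then show ?case by simp
next
  case (3 x y r) then show ?case by simp
qed

lemma cancel2: "trl A q \<Longrightarrow> trl A (Z @ butlast q @ revw q @ (fst (hd q), k) # Y) \<Longrightarrow>
  trail_eq A (Z @ butlast q @ revw q @ (fst (hd q), k) # Y) (Z @ (fst (hd q), k) # Y)"
proof (induction q arbitrary: Z rule: rev_induct)
  case Nil then show ?case by simp
next
  case (snoc z q)
  show ?case
  proof (cases "q = []")
    case True then show ?thesis using snoc.prems eq_refl' by simp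
  next
    case False
    then obtain q'' w where qw: "q = q'' @ [w]" using rev_exhaust by blast
    have qne: "q \<noteq> []" using False .
    have hd: "fst (hd (q @ [z])) = fst (hd q)" using qne by simp
    have "\<exists>k' B. revw q @ (fst (hd q), k) # Y = (fst w, k') # B"
    proof (cases "q'' = []")
      case True then show ?thesis using qw by simp
    next
      case False then show ?thesis using revw_snoc[OF False, of w] qw by simp
    qed
    then obtain k' B where B: "revw q @ (fst (hd q), k) # Y = (fst w, k') # B" by blast
    have rq: "revw (q @ [z]) = (fst z, snd w) # revw q" using revw_snoc[OF qne, of z] qw by simp
    have e1: "Z @ butlast (q @ [z]) @ revw (q @ [z]) @ (fst (hd (q @ [z])), k) # Y
       = (Z @ q'') @ [(fst w, snd w), (fst z, snd w), (fst w, k')] @ B"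
      using B hd rq qw by (simp add: butlast_append)
    have e2: "(Z @ q'') @ [(fst w, k')] @ B = Z @ butlast q @ revw q @ (fst (hd q), k) # Y"
      using qw B by simp
    have t1: "trl A ((Z @ q'') @ [(fst w, snd w), (fst z, snd w), (fst w, k')] @ B)"
      using snoc.prems(2) e1 by simp
    have s1: "trail_eq A ((Z @ q'') @ [(fst w, snd w), (fst z, snd w), (fst w, k')] @ B)
       ((Z @ q'') @ [(fst w, k')] @ B)" using step_A[OF t1] .
    have t2: "trl A (Z @ butlast q @ revw q @ (fst (hd q), k) # Y)" using trl_A_small[OF t1] e2 by simp
    have tq: "trl A q" using snoc.prems(1) qw trl_append[of A "q''" w "[z]"] by simp
    have s2: "trail_eq A (Z @ butlast q @ revw q @ (fst (hd q), k) # Y) (Z @ (fst (hd q), k) # Y)"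
      using snoc.IH[OF tq t2] .
    show ?thesis using te_trans[OF s1[unfolded e2] s2] e1 hd by simp
  qed
qed


definition Wd :: "'a trail \<Rightarrow> 'a trail \<Rightarrow> 'a trail" where "Wd p p' = butlast p' @ revw p"

definition Fm :: "'a trail \<Rightarrow> 'a trail \<Rightarrow> 'a trail \<Rightarrow> 'a trail" where
  "Fm p p' r = (if fst (hd r) = fst (hd p) then Wd p p' @ r
     else if fst (hd r) = fst (hd p') then Wd p' p @ r else r)"

lemma hd_revw: "p \<noteq> [] \<Longrightarrow> r \<noteq> [] \<Longrightarrow> fst (hd r) = fst (hd p) \<Longrightarrow> fst (hd (revw p @ r)) = fst (last p)"
proof (induction p arbitrary: r rule: revw.induct)
  case 1 then show ?case by simp
next
  case (2 x) then show ?case by simp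
next
  case (3 x y r')
  have "fst (hd (revw (y#r') @ ((fst y, snd x) # r))) = fst (last (y#r'))"
    using 3(1)[of "(fst y, snd x) # r"] by simp
  then show ?case by simp
qed

lemma trl_revw: "trl A p \<Longrightarrow> trl A r \<Longrightarrow> fst (hd r) = fst (hd p) \<Longrightarrow> trl A (revw p @ r)"
proof (induction p arbitrary: r rule: revw.induct)
  case 1 then show ?case by simp
next
  case (2 x) then show ?case by simp
next
  case (3 x y r')
  obtain k r'' where r: "r = (fst x, k) # r''" using 3(3,4) by (cases r) auto
  have xy: "fst x \<in> SB A" "snd x < 3" "fst x \<noteq> fst y" "(fst x, fst y) \<in> ST A (snd x)"
    using 3(2) by auto
  have xy5: "fst y \<in> SB A" using 3(2) by (cases r') auto
  have "trl A ((fst y, snd x) # r)" using r xy xy5 3(3) ST_sym[OF xy(4)] by auto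
  then have "trl A (revw (y#r') @ ((fst y, snd x) # r))" using 3(1) 3(2) by simp
  then show ?case by simp
qed

lemma trl_W: "trl A p \<Longrightarrow> trl A p' \<Longrightarrow> fst (last p) = fst (last p') \<Longrightarrow> trl A r \<Longrightarrow> fst (hd r) = fst (hd p) \<Longrightarrow>
  trl A (Wd p p' @ r) \<and> fst (hd (Wd p p' @ r)) = fst (hd p')"
proof -
  assume h: "trl A p" "trl A p'" "fst (last p) = fst (last p')" "trl A r" "fst (hd r) = fst (hd p)"
  have pne: "p \<noteq> []" "p' \<noteq> []" "r \<noteq> []" using h by auto
  have R: "trl A (revw p @ r)" using trl_revw h by blast
  have Rh: "fst (hd (revw p @ r)) = fst (last p')" using hd_revw[OF pne(1) pne(3) h(5)] h(3) by simp
  obtain k R' where RR: "revw p @ r = (fst (last p'), k) # R'" using Rh pne(3)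
    by (cases "revw p @ r") auto
  have p': "p' = butlast p' @ [(fst (last p'), snd (last p'))]" using pne(2) by simp
  have "trl A (butlast p' @ (fst (last p'), k) # R')"
    using trl_join[of A "butlast p'" "fst (last p')" "snd (last p')" k R'] h(2) p' R RR by simp
  then have t: "trl A (Wd p p' @ r)" unfolding Wd_def using RR by simp
  have "fst (hd (Wd p p' @ r)) = fst (hd p')"
  proof (cases "butlast p' = []")
    case True
    have pl: "p' = [last p']" using append_butlast_last_id[OF pne(2)] True by simp
    have hl: "hd p' = last p'" using pl by (metis list.sel(1))
    have "Wd p p' @ r = (fst (last p'), k) # R'" unfolding Wd_def using True RR by simp
    then show ?thesis using hl by simp
  next
    case False
    have "hd (butlast p' @ [last p']) = hd (butlast p')" using False by (rule hd_append2)
    then have "hd (butlast p') = hd p'" using append_butlast_last_id[OF pne(2)] by simp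
    then show ?thesis unfolding Wd_def using False by (simp add: hd_append)
  qed
  then show ?thesis using t by simp
qed

lemma step_hd: "trail_step A r r' \<Longrightarrow> fst (hd r) = fst (hd r')"
  by (induction rule: trail_step.induct) (auto simp: hd_append)

lemma eq_hd: "trail_eq A r r' \<Longrightarrow> fst (hd r) = fst (hd r')"
  by (induction rule: trail_eq.induct) (auto dest: step_hd)

lemma W_step: "trl A p \<Longrightarrow> trl A p' \<Longrightarrow> fst (last p) = fst (last p') \<Longrightarrow>
  trail_step A r r' \<Longrightarrow> fst (hd r) = fst (hd p) \<Longrightarrow> trail_step A (Wd p p' @ r) (Wd p p' @ r')"
proof -
  assume h: "trl A p" "trl A p'" "fst (last p) = fst (last p')" "trail_step A r r'" "fst (hd r) = fst (hd p)"
  have tr: "trl A r" "trl A r'" using step_trl h(4) by auto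
  have h': "fst (hd r') = fst (hd p)" using step_hd[OF h(4)] h(5) by simp
  have t1: "is_trail A (Wd p p' @ r)" using trl_W[OF h(1-3) tr(1) h(5)] is_trail_trl by blast
  have t2: "is_trail A (Wd p p' @ r')" using trl_W[OF h(1-3) tr(2) h'] is_trail_trl by blast
  show ?thesis using h(4) t1 t2
  proof (induction rule: trail_step.cases)
    case (ruleA xs t l s k ys)
    then show ?case using trail_step.ruleA[of A "Wd p p' @ xs" t l s k ys] by simp
  next
    case (ruleB xs t l s v)
    then show ?case using trail_step.ruleB[of A "Wd p p' @ xs" t l s v] by simp
  next
    case (ruleC xs t l k)
    then show ?case using trail_step.ruleC[of A "Wd p p' @ xs" t l k] by simp
  qed
qed

lemma W_eq: "trl A p \<Longrightarrow> trl A p' \<Longrightarrow> fst (last p) = fst (last p') \<Longrightarrow>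
  trail_eq A r r' \<Longrightarrow> fst (hd r) = fst (hd p) \<Longrightarrow> trail_eq A (Wd p p' @ r) (Wd p p' @ r')"
proof -
  assume h: "trl A p" "trl A p'" "fst (last p) = fst (last p')"
  show "trail_eq A r r' \<Longrightarrow> fst (hd r) = fst (hd p) \<Longrightarrow> trail_eq A (Wd p p' @ r) (Wd p p' @ r')"
  proof (induction rule: trail_eq.induct)
    case (te_refl q)
    then show ?case using trl_W[OF h, of q] is_trail_trl by (metis trail_eq.te_refl)
  next
    case (te_step q q')
    then show ?case using W_step[OF h te_step(1)] trail_eq.te_step by blast
  next
    case (te_sym q q')
    then show ?case using eq_hd trail_eq.te_sym by metis
  next
    case (te_trans q q' q'')
    then show ?case using eq_hd trail_eq.te_trans by metis
  qed
qed

lemma F_eq: "trl A p \<Longrightarrow> trl A p' \<Longrightarrow> fst (last p) = fst (last p') \<Longrightarrow>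
  trail_eq A r r' \<Longrightarrow> trail_eq A (Fm p p' r) (Fm p p' r')"
proof -
  assume h: "trl A p" "trl A p'" "fst (last p) = fst (last p')" "trail_eq A r r'"
  have e: "fst (hd r) = fst (hd r')" using eq_hd h(4) .
  show ?thesis
  proof (cases "fst (hd r) = fst (hd p)")
    case True then show ?thesis unfolding Fm_def using W_eq[OF h(1-3) h(4)] e by simp
  next
    case False
    show ?thesis
    proof (cases "fst (hd r) = fst (hd p')")
      case True then show ?thesis unfolding Fm_def using W_eq[OF h(2) h(1) h(3)[symmetric] h(4)] e False by simp
    next
      case False2: False
      then show ?thesis unfolding Fm_def using h(4) e False by simp
    qed
  qed
qed

lemma F_trl: "trl A p \<Longrightarrow> trl A p' \<Longrightarrow> fst (last p) = fst (last p') \<Longrightarrow> trl A r \<Longrightarrow> trl A (Fm p p' r)"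
  unfolding Fm_def using trl_W[of A p p' r] trl_W[of A p' p r] by auto

lemma relab_app: "r \<noteq> [] \<Longrightarrow> relab (W @ r) k = W @ relab r k"
  unfolding relab_def by (simp add: butlast_append)

lemma hd_relab: "r \<noteq> [] \<Longrightarrow> fst (hd (relab r k)) = fst (hd r)"
  unfolding relab_def by (cases r rule: rev_cases) (auto simp: hd_append)

lemma last_relab: "fst (last (relab r k)) = fst (last r)"
  unfolding relab_def by simp

lemma F_relab: "r \<noteq> [] \<Longrightarrow> Fm p p' (relab r k) = relab (Fm p p' r) k"
  unfolding Fm_def using hd_relab[of r k] by (simp add: relab_app)

lemma F_last: "r \<noteq> [] \<Longrightarrow> fst (last (Fm p p' r)) = fst (last r)"
  unfolding Fm_def by simp

lemma cancelW: "trl A p \<Longrightarrow> trl A p' \<Longrightarrow> fst (last p) = fst (last p') \<Longrightarrow> trl A r \<Longrightarrow> fst (hd r) = fst (hd p) \<Longrightarrow>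
  trail_eq A (Wd p' p @ Wd p p' @ r) r"
proof -
  assume h: "trl A p" "trl A p'" "fst (last p) = fst (last p')" "trl A r" "fst (hd r) = fst (hd p)"
  have pne: "p \<noteq> []" "r \<noteq> []" using h by auto
  have W1: "trl A (Wd p p' @ r)" "fst (hd (Wd p p' @ r)) = fst (hd p')" using trl_W[OF h] by auto
  have W2: "trl A (Wd p' p @ (Wd p p' @ r))" using trl_W[OF h(2) h(1) h(3)[symmetric] W1] by blast
  have Rh: "fst (hd (revw p @ r)) = fst (last p')" using hd_revw[OF pne h(5)] h(3) by simp
  obtain k Y where RR: "revw p @ r = (fst (last p'), k) # Y" using Rh pne(2)
    by (cases "revw p @ r") auto
  have e1: "Wd p' p @ Wd p p' @ r = butlast p @ revw p' @ butlast p' @ (fst (last p'), k) # Y"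
    unfolding Wd_def using RR by simp
  have s1: "trail_eq A (butlast p @ revw p' @ butlast p' @ (fst (last p'), k) # Y) (butlast p @ (fst (last p'), k) # Y)"
    using cancel1[OF h(2)] W2 e1 by simp
  obtain k2 Y2 where rr: "r = (fst (hd p), k2) # Y2" using h(5) pne(2) by (cases r) auto
  have e2: "butlast p @ (fst (last p'), k) # Y = [] @ butlast p @ revw p @ (fst (hd p), k2) # Y2"
    using RR rr by simp
  have t2: "trl A ([] @ butlast p @ revw p @ (fst (hd p), k2) # Y2)"
    using trl_A_small eq_trl s1 e2 by metis
  have s2: "trail_eq A ([] @ butlast p @ revw p @ (fst (hd p), k2) # Y2) ([] @ (fst (hd p), k2) # Y2)"
    using cancel2[OF h(1) t2] .
  show ?thesis using te_trans[OF s1 s2[folded e2]] e1 rr by simp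
qed

lemma F_inv: "trl A p \<Longrightarrow> trl A p' \<Longrightarrow> fst (last p) = fst (last p') \<Longrightarrow> trl A r \<Longrightarrow>
  trail_eq A (Fm p' p (Fm p p' r)) r"
proof -
  assume h: "trl A p" "trl A p'" "fst (last p) = fst (last p')" "trl A r"
  show ?thesis
  proof (cases "fst (hd r) = fst (hd p)")
    case True
    have W1: "fst (hd (Wd p p' @ r)) = fst (hd p')" using trl_W[OF h True] by auto
    have "Fm p' p (Fm p p' r) = Wd p' p @ Wd p p' @ r" unfolding Fm_def using True W1 by simp
    then show ?thesis using cancelW[OF h True] by simp
  next
    case False
    show ?thesis
    proof (cases "fst (hd r) = fst (hd p')")
      case True
      have W1: "fst (hd (Wd p' p @ r)) = fst (hd p)" using trl_W[OF h(2) h(1) h(3)[symmetric] h(4) True] by auto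
      have "Fm p' p (Fm p p' r) = Wd p p' @ Wd p' p @ r" unfolding Fm_def using True False W1 by auto
      then show ?thesis using cancelW[OF h(2) h(1) h(3)[symmetric] h(4) True] by simp
    next
      case False2: False
      then show ?thesis unfolding Fm_def using False eq_refl' h(4) by simp
    qed
  qed
qed

lemma F_v: "trl A p \<Longrightarrow> trl A p' \<Longrightarrow> fst (last p) = fst (last p') \<Longrightarrow> k < 3 \<Longrightarrow>
  trail_eq A (Fm p p' (relab p k)) (relab p' k)"
proof -
  assume h: "trl A p" "trl A p'" "fst (last p) = fst (last p')" "k < 3"
  have pne: "p \<noteq> []" using h by auto
  have rp: "trl A (relab p k)" using trl_relab h by blast
  have hh: "fst (hd (relab p k)) = fst (hd p)" using hd_relab pne by blast
  have e: "Fm p p' (relab p k) = butlast p' @ revw p @ butlast p @ [(fst (last p), k)]"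
    unfolding Fm_def Wd_def relab_def using hh[unfolded relab_def] by simp
  have t: "trl A (butlast p' @ revw p @ butlast p @ (fst (last p), k) # [])"
    using trl_W[OF h(1-3) rp hh] e unfolding Fm_def using hh by simp
  have "trail_eq A (butlast p' @ revw p @ butlast p @ (fst (last p), k) # []) (butlast p' @ (fst (last p), k) # [])"
    using cancel1[OF h(1) t] .
  then show ?thesis using e h(3) unfolding relab_def by simp
qed


lemma tr0: "tr (a,b,c) 0 = a" and tr1: "tr (a,b,c) 1 = b" and tr2: "tr (a,b,c) 2 = c"
  unfolding tr_def by simp_all

lemma tr1': "tr (a,b,c) (Suc 0) = b" unfolding tr_def by simp

lemma tri_eq: "tr s 0 = tr t 0 \<Longrightarrow> tr s 1 = tr t 1 \<Longrightarrow> tr s 2 = tr t 2 \<Longrightarrow> s = t"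
  unfolding tr_def by (simp add: prod_eq_iff)

definition m3 :: "('x \<Rightarrow> 'x) \<Rightarrow> 'x \<times> 'x \<times> 'x \<Rightarrow> 'x \<times> 'x \<times> 'x" where
  "m3 f w = (f (fst w), f (fst (snd w)), f (snd (snd w)))"

lemma tr_m3: "l < 3 \<Longrightarrow> tr (m3 f w) l = f (tr w l)"
  unfolding m3_def tr_def by auto

lemma less3: "k < (3::nat) \<Longrightarrow> k = 0 \<or> k = 1 \<or> k = 2" by auto

lemma all3: "(\<forall>l<(3::nat). P l) \<longleftrightarrow> P 0 \<and> P 1 \<and> P 2"
proof
  assume "\<forall>l<3. P l" then show "P 0 \<and> P 1 \<and> P 2" by simp
next
  assume h: "P 0 \<and> P 1 \<and> P 2"
  show "\<forall>l<3. P l"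
  proof (intro allI impI)
    fix l :: nat assume "l < 3"
    then have "l = 0 \<or> l = 1 \<or> l = 2" by (rule less3)
    then show "P l" using h by blast
  qed
qed

lemma U3_iff: "w \<in> U3 A \<longleftrightarrow> (\<forall>l<3. tr w l \<in> UB A)"
  unfolding all3 U3_def by (cases w) (simp add: tr0 tr1 tr2 tr1')

lemma cls_self: "trl A p \<Longrightarrow> p \<in> cls A p"
  unfolding cls_def using te_refl is_trail_trl by blast

lemma cls_eq_iff: "trl A p \<Longrightarrow> trl A q \<Longrightarrow> cls A p = cls A q \<longleftrightarrow> trail_eq A p q"
proof
  assume h: "trl A p" "trl A q" "cls A p = cls A q"
  then show "trail_eq A p q" using cls_self[OF h(2)] unfolding cls_def by blast
next
  assume h: "trl A p" "trl A q" "trail_eq A p q"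
  show "cls A p = cls A q" unfolding cls_def using h(3) te_sym te_trans by blast
qed

lemma cls_mem: "r \<in> cls A q \<Longrightarrow> trail_eq A q r" unfolding cls_def by simp

lemma Rt_mem: "w \<in> Rt A t \<longleftrightarrow> (\<exists>p. trl A p \<and> fst (last p) = t \<and> w = (cls A (relab p 0), cls A (relab p 1), cls A (relab p 2)))"
  unfolding Rt_def is_trail_trl by blast

lemma UB_mem: "c \<in> UB A \<longleftrightarrow> (\<exists>q. trl A q \<and> c = cls A q)"
  unfolding UB_def Tr_def is_trail_trl by (auto simp: image_iff)

lemma Rt_U3: "Rt A t \<subseteq> U3 A"
proof
  fix w assume "w \<in> Rt A t"
  then obtain p where p: "trl A p" "w = (cls A (relab p 0), cls A (relab p 1), cls A (relab p 2))"
    using Rt_mem by blast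
  have "trl A (relab p 0)" "trl A (relab p 1)" "trl A (relab p 2)"
    using trl_relab[OF p(1), of 0] trl_relab[OF p(1), of 1] trl_relab[OF p(1), of 2] by simp_all
  then show "w \<in> U3 A" unfolding U3_def using p UB_mem by blast
qed

lemma Cgen_U3: "Z \<in> Cgen A \<Longrightarrow> Z \<subseteq> U3 A"
  by (induction rule: Cgen.induct) (auto simp: cylU_def diagU_def dest: Rt_U3[THEN subsetD])

lemma Cgen_inv:
  assumes s1: "\<forall>x\<in>UB A. \<sigma> x \<in> UB A" and s2: "\<forall>x\<in>UB A. \<tau> x \<in> UB A"
    and s3: "\<forall>x\<in>UB A. \<tau> (\<sigma> x) = x" and s4: "\<forall>x\<in>UB A. \<sigma> (\<tau> x) = x"
    and sR: "\<forall>s\<in>SB A. \<forall>w\<in>U3 A. w \<in> Rt A s \<longleftrightarrow> m3 \<sigma> w \<in> Rt A s"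
  shows "Z \<in> Cgen A \<Longrightarrow> (\<forall>w\<in>U3 A. w \<in> Z \<longleftrightarrow> m3 \<sigma> w \<in> Z)"
proof (induction rule: Cgen.induct)
  case (gen t) then show ?case using sR by blast
next
  case (union S) then show ?case using union.IH by blast
next
  have mU: "w \<in> U3 A \<Longrightarrow> m3 f w \<in> U3 A" if "\<forall>x\<in>UB A. f x \<in> UB A" for f w
    using that unfolding U3_iff by (simp add: tr_m3)
  case (compl X) then show ?case using mU[OF s1] compl.IH by blast
next
  have mU: "w \<in> U3 A \<Longrightarrow> m3 f w \<in> U3 A" if "\<forall>x\<in>UB A. f x \<in> UB A" for f w
    using that unfolding U3_iff by (simp add: tr_m3)
  case (cyl X k)
  have XU: "X \<subseteq> U3 A" using Cgen_U3 cyl.hyps(1) .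
  show ?case
  proof (intro ballI iffI)
    fix w assume w: "w \<in> U3 A" "w \<in> cylU A k X"
    then obtain u where u: "u \<in> X" "\<forall>l<3. l \<noteq> k \<longrightarrow> tr u l = tr w l" unfolding cylU_def by blast
    have "m3 \<sigma> u \<in> X" using cyl.IH u(1) XU by blast
    moreover have "\<forall>l<3. l \<noteq> k \<longrightarrow> tr (m3 \<sigma> u) l = tr (m3 \<sigma> w) l" using u(2) by (simp add: tr_m3)
    ultimately show "m3 \<sigma> w \<in> cylU A k X" unfolding cylU_def using mU[OF s1 w(1)] by blast
  next
    fix w assume w: "w \<in> U3 A" "m3 \<sigma> w \<in> cylU A k X"
    then obtain u' where u': "u' \<in> X" "\<forall>l<3. l \<noteq> k \<longrightarrow> tr u' l = tr (m3 \<sigma> w) l" unfolding cylU_def by blast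
    define u where "u = m3 \<tau> u'"
    have uU: "u \<in> U3 A" unfolding u_def using mU[OF s2] u'(1) XU by blast
    have u'U: "u' \<in> U3 A" using u'(1) XU by blast
    have "m3 \<sigma> u = u'" unfolding u_def using u'U s4 unfolding U3_iff
      by (intro tri_eq) (simp_all add: tr_m3)
    then have "u \<in> X" using cyl.IH uU u'(1) by simp
    moreover have "\<forall>l<3. l \<noteq> k \<longrightarrow> tr u l = tr w l"
    proof (intro allI impI)
      fix l assume l: "l < 3" "l \<noteq> k"
      have "tr u l = \<tau> (\<sigma> (tr w l))" unfolding u_def using u'(2) l by (simp add: tr_m3)
      also have "\<dots> = tr w l" using s3 w(1) l unfolding U3_iff by simp
      finally show "tr u l = tr w l" .
    qed
    ultimately show "w \<in> cylU A k X" unfolding cylU_def using w(1) by blast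
  qed
next
  have mU: "w \<in> U3 A \<Longrightarrow> m3 f w \<in> U3 A" if "\<forall>x\<in>UB A. f x \<in> UB A" for f w
    using that unfolding U3_iff by (simp add: tr_m3)
  case (diag k l)
  show ?case
  proof (intro ballI)
    fix w assume w: "w \<in> U3 A"
    have inj: "\<sigma> a = \<sigma> b \<Longrightarrow> a \<in> UB A \<Longrightarrow> b \<in> UB A \<Longrightarrow> a = b" for a b using s3 by metis
    have "tr w k \<in> UB A" "tr w l \<in> UB A" using w diag.hyps unfolding U3_iff by auto
    then have "tr w k = tr w l \<longleftrightarrow> \<sigma> (tr w k) = \<sigma> (tr w l)" using inj by metis
    then show "w \<in> diagU A k l \<longleftrightarrow> m3 \<sigma> w \<in> diagU A k l"
      unfolding diagU_def using w mU[OF s1 w] diag.hyps by (simp add: tr_m3)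
  qed
qed

context wal begin

lemma Rt_SB: "w \<in> Rt A t \<Longrightarrow> t \<in> SB A"
proof -
  assume "w \<in> Rt A t"
  then obtain p where p: "trl A p" "fst (last p) = t" using Rt_mem by blast
  have "last p \<in> set p" using trl_nonempty[OF p(1)] by simp
  then show ?thesis using trl_SB[OF p(1)] p(2) by blast
qed

lemma Rt_ne: "t \<in> SB A \<Longrightarrow> Rt A t \<noteq> {}"
proof -
  assume t: "t \<in> SB A"
  have "trl A [(t,0)]" using t by simp
  then have "\<exists>p. trl A p \<and> fst (last p) = t \<and> (cls A (relab [(t,0)] 0), cls A (relab [(t,0)] 1), cls A (relab [(t,0)] 2)) = (cls A (relab p 0), cls A (relab p 1), cls A (relab p 2))"
    by (intro exI[of _ "[(t,0)]"]) simp
  then have "(cls A (relab [(t,0)] 0), cls A (relab [(t,0)] 1), cls A (relab [(t,0)] 2)) \<in> Rt A t"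
    using Rt_mem[THEN iffD2] by blast
  then show ?thesis by blast
qed

lemma cls_pt: "trl A p \<Longrightarrow> trl A q \<Longrightarrow> cls A p = cls A q \<Longrightarrow> pt A p = pt A q"
  using cls_eq_iff eq_pt by blast

lemma Rt_disj: "w \<in> Rt A s \<Longrightarrow> w \<in> Rt A t \<Longrightarrow> s = t"
proof -
  assume "w \<in> Rt A s" "w \<in> Rt A t"
  then obtain p q where p: "trl A p" "fst (last p) = s" "w = (cls A (relab p 0), cls A (relab p 1), cls A (relab p 2))"
    and q: "trl A q" "fst (last q) = t" "w = (cls A (relab q 0), cls A (relab q 1), cls A (relab q 2))"
    using Rt_mem by metis
  have e: "pt A (relab p k) = pt A (relab q k)" if "k < 3" for k
  proof -
    have "cls A (relab p k) = cls A (relab q k)" using p(3) q(3) that less_3_cases by auto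
    then show ?thesis using cls_pt trl_relab p q that by blast
  qed
  have c2: "tr s 2 = tr t 2" using N2[OF p(1) q(1), of 0 1] e p(2) q(2) by simp
  have c1: "tr s 1 = tr t 1" using N2[OF p(1) q(1), of 0 2] e p(2) q(2) by simp
  have c0: "tr s 0 = tr t 0" using N2[OF p(1) q(1), of 1 2] e p(2) q(2) by simp
  show ?thesis using tri_eq c0 c1 c2 by blast
qed

definition sg :: "'a trail \<Rightarrow> 'a trail \<Rightarrow> 'a trail set \<Rightarrow> 'a trail set" where
  "sg p p' c = cls A (Fm p p' (SOME r. r \<in> c))"

lemma sg_cls: "trl A p \<Longrightarrow> trl A p' \<Longrightarrow> fst (last p) = fst (last p') \<Longrightarrow> trl A q \<Longrightarrow>
  sg p p' (cls A q) = cls A (Fm p p' q)"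
proof -
  assume h: "trl A p" "trl A p'" "fst (last p) = fst (last p')" "trl A q"
  define r where "r = (SOME r. r \<in> cls A q)"
  have "r \<in> cls A q" unfolding r_def using cls_self[OF h(4)] by (rule someI)
  then have e: "trail_eq A q r" by (rule cls_mem)
  have tr: "trl A r" using eq_trl e by blast
  have "trail_eq A (Fm p p' q) (Fm p p' r)" using F_eq[OF h(1-3) e] .
  then have "cls A (Fm p p' r) = cls A (Fm p p' q)"
    using cls_eq_iff F_trl h tr te_sym by metis
  then show ?thesis unfolding sg_def r_def by simp
qed

lemma sg_props:
  assumes h: "trl A p" "trl A p'" "fst (last p) = fst (last p')"
  shows "\<forall>x\<in>UB A. sg p p' x \<in> UB A" "\<forall>x\<in>UB A. sg p' p (sg p p' x) = x"
    "\<forall>s. \<forall>w. w \<in> Rt A s \<longrightarrow> m3 (sg p p') w \<in> Rt A s"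
proof -
  show "\<forall>x\<in>UB A. sg p p' x \<in> UB A"
  proof
    fix x assume "x \<in> UB A"
    then obtain q where q: "trl A q" "x = cls A q" using UB_mem by blast
    then show "sg p p' x \<in> UB A" using sg_cls[OF h q(1)] F_trl[OF h q(1)] UB_mem by auto
  qed
  show "\<forall>x\<in>UB A. sg p' p (sg p p' x) = x"
  proof
    fix x assume "x \<in> UB A"
    then obtain q where q: "trl A q" "x = cls A q" using UB_mem by blast
    have t1: "trl A (Fm p p' q)" using F_trl[OF h q(1)] .
    have "sg p' p (sg p p' x) = cls A (Fm p' p (Fm p p' q))"
      using sg_cls[OF h q(1)] sg_cls[OF h(2) h(1) h(3)[symmetric] t1] q(2) by simp
    also have "\<dots> = cls A q" using F_inv[OF h q(1)] cls_eq_iff F_trl[OF h(2) h(1) h(3)[symmetric] t1] q(1) by blast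
    finally show "sg p' p (sg p p' x) = x" using q by simp
  qed
  show "\<forall>s. \<forall>w. w \<in> Rt A s \<longrightarrow> m3 (sg p p') w \<in> Rt A s"
  proof (intro allI impI)
    fix s w assume "w \<in> Rt A s"
    then obtain r where r: "trl A r" "fst (last r) = s" "w = (cls A (relab r 0), cls A (relab r 1), cls A (relab r 2))"
      using Rt_mem by blast
    have rne: "r \<noteq> []" using r by auto
    have e: "sg p p' (cls A (relab r k)) = cls A (relab (Fm p p' r) k)" if "k < 3" for k
      using sg_cls[OF h trl_relab[OF r(1) that]] F_relab[OF rne] by simp
    have "m3 (sg p p') w = (cls A (relab (Fm p p' r) 0), cls A (relab (Fm p p' r) 1), cls A (relab (Fm p p' r) 2))"
      unfolding m3_def r(3) using e by simp
    moreover have "trl A (Fm p p' r)" "fst (last (Fm p p' r)) = s" using F_trl[OF h r(1)] F_last[OF rne] r(2) by auto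
    ultimately show "m3 (sg p p') w \<in> Rt A s" using Rt_mem by blast
  qed
qed

lemma HOM: "Z \<in> Cgen A \<Longrightarrow> w \<in> Rt A t \<Longrightarrow> w' \<in> Rt A t \<Longrightarrow> w \<in> Z \<Longrightarrow> w' \<in> Z"
proof -
  assume Z: "Z \<in> Cgen A" and w: "w \<in> Rt A t" "w' \<in> Rt A t" "w \<in> Z"
  obtain p where p: "trl A p" "fst (last p) = t" "w = (cls A (relab p 0), cls A (relab p 1), cls A (relab p 2))"
    using w(1) Rt_mem by blast
  obtain p' where p': "trl A p'" "fst (last p') = t" "w' = (cls A (relab p' 0), cls A (relab p' 1), cls A (relab p' 2))"
    using w(2) Rt_mem by blast
  have h: "trl A p" "trl A p'" "fst (last p) = fst (last p')" using p p' by auto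
  have h': "trl A p'" "trl A p" "fst (last p') = fst (last p)" using p p' by auto
  note A1 = sg_props[OF h] and A2 = sg_props[OF h']
  have sR: "\<forall>s\<in>SB A. \<forall>w\<in>U3 A. w \<in> Rt A s \<longleftrightarrow> m3 (sg p p') w \<in> Rt A s"
  proof (intro ballI iffI)
    fix s w assume "w \<in> Rt A s" then show "m3 (sg p p') w \<in> Rt A s" using A1(3) by blast
  next
    fix s w assume sw: "w \<in> U3 A" "m3 (sg p p') w \<in> Rt A s"
    then have "m3 (sg p' p) (m3 (sg p p') w) \<in> Rt A s" using A2(3) by blast
    moreover have "m3 (sg p' p) (m3 (sg p p') w) = w"
      using A1(2) sw(1) unfolding U3_iff by (intro tri_eq) (simp_all add: tr_m3)
    ultimately show "w \<in> Rt A s" by simp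
  qed
  have inv: "\<forall>w\<in>U3 A. w \<in> Z \<longleftrightarrow> m3 (sg p p') w \<in> Z"
    using Cgen_inv[OF A1(1) A2(1) A1(2) A2(2) sR Z] .
  have wU: "w \<in> U3 A" using w(1) Rt_U3 by blast
  have e: "sg p p' (cls A (relab p k)) = cls A (relab p' k)" if "k < 3" for k
  proof -
    have t1: "trl A (relab p k)" using trl_relab p(1) that by blast
    have "sg p p' (cls A (relab p k)) = cls A (Fm p p' (relab p k))" using sg_cls[OF h t1] .
    also have "\<dots> = cls A (relab p' k)"
      using F_v[OF h that] cls_eq_iff F_trl[OF h t1] trl_relab[OF p'(1) that] by blast
    finally show ?thesis .
  qed
  have "m3 (sg p p') w = w'" unfolding m3_def p(3) p'(3) using e by simp
  then show ?thesis using inv wU w(3) by blast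
qed

end

lemma tr_cls3: "l < 3 \<Longrightarrow> tr (f 0, f 1, f 2) l = f l"
  using less3[of l] by (auto simp: tr_def)

lemma other2: "k < (3::nat) \<Longrightarrow> \<exists>i j. i < 3 \<and> j < 3 \<and> i \<noteq> j \<and> i \<noteq> k \<and> j \<noteq> k \<and> 3 - i - j = k"
proof -
  assume "k < 3"
  then have "k = 0 \<or> k = 1 \<or> k = 2" by (rule less3)
  then show ?thesis
  proof (elim disjE)
    assume "k = 0" then show ?thesis by (intro exI[of _ 1] exI[of _ 2]) simp
  next
    assume "k = 1" then show ?thesis by (intro exI[of _ 0] exI[of _ 2]) simp
  next
    assume "k = 2" then show ?thesis by (intro exI[of _ 0] exI[of _ 1]) simp
  qed
qed

context wal begin

lemma Rmap_mem: "w \<in> Rmap A X \<longleftrightarrow> (\<exists>t\<in>X. w \<in> Rt A t)" unfolding Rmap_def by blast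
lemma VB_mem: "w \<in> VB A \<longleftrightarrow> (\<exists>t\<in>SB A. w \<in> Rt A t)" unfolding VB_def by blast

lemma Rmap_Cgen: "X \<subseteq> SB A \<Longrightarrow> Rmap A X \<in> Cgen A"
proof -
  assume X: "X \<subseteq> SB A"
  have "\<Union> (Rt A ` X) \<in> Cgen A" by (rule Cgen.union) (use X Cgen.gen in blast)
  then show ?thesis unfolding Rmap_def by simp
qed

lemma Rmap_VB: "X \<subseteq> SB A \<Longrightarrow> Rmap A X \<subseteq> VB A" unfolding Rmap_def VB_def by blast

lemma Cgen_VB: "Z \<in> Cgen A \<Longrightarrow> Z \<subseteq> VB A \<Longrightarrow> Z = Rmap A {t \<in> SB A. Rt A t \<subseteq> Z}"
proof
  assume Z: "Z \<in> Cgen A" "Z \<subseteq> VB A"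
  show "Z \<subseteq> Rmap A {t \<in> SB A. Rt A t \<subseteq> Z}"
  proof
    fix w assume w: "w \<in> Z"
    then obtain t where t: "t \<in> SB A" "w \<in> Rt A t" using Z(2) VB_mem by blast
    have "Rt A t \<subseteq> Z" using HOM[OF Z(1) t(2) _ w] by blast
    then show "w \<in> Rmap A {t \<in> SB A. Rt A t \<subseteq> Z}" using t Rmap_mem by blast
  qed
next
  show "Rmap A {t \<in> SB A. Rt A t \<subseteq> Z} \<subseteq> Z" unfolding Rmap_def by blast
qed

lemma Rmap_inj: "X \<subseteq> SB A \<Longrightarrow> Y \<subseteq> SB A \<Longrightarrow> Rmap A X = Rmap A Y \<Longrightarrow> X = Y"
proof -
  have sub: "X \<subseteq> Y" if h: "X \<subseteq> SB A" "Rmap A X = Rmap A Y" for X Y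
  proof
    fix t assume t: "t \<in> X"
    then obtain w where w: "w \<in> Rt A t" using Rt_ne h(1) by blast
    then have "w \<in> Rmap A Y" using h(2) t Rmap_mem by blast
    then obtain t' where "t' \<in> Y" "w \<in> Rt A t'" using Rmap_mem by blast
    then show "t \<in> Y" using Rt_disj w by blast
  qed
  assume "X \<subseteq> SB A" "Y \<subseteq> SB A" "Rmap A X = Rmap A Y"
  then show ?thesis using sub by blast
qed

lemma Rmap_int: "Rmap A (X \<inter> Y) = Rmap A X \<inter> Rmap A Y"
  unfolding Rmap_def using Rt_disj by blast

lemma Rmap_un: "Rmap A (X \<union> Y) = Rmap A X \<union> Rmap A Y"
  unfolding Rmap_def by blast

lemma Rmap_compl: "X \<subseteq> SB A \<Longrightarrow> Rmap A (SB A - X) = VB A - Rmap A X"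
  unfolding Rmap_def VB_def using Rt_disj by blast

lemma cls_step: "trail_step A p q \<Longrightarrow> cls A p = cls A q"
proof -
  assume s: "trail_step A p q"
  have "trl A p" "trl A q" using step_trl s by auto
  then show ?thesis using cls_eq_iff te_step s by blast
qed

lemma Rmap_cyl: "X \<subseteq> SB A \<Longrightarrow> k < 3 \<Longrightarrow> Rmap A (Tstar A k X) = VB A \<inter> cylU A k (Rmap A X)"
proof
  assume X: "X \<subseteq> SB A" and k: "k < 3"
  show "Rmap A (Tstar A k X) \<subseteq> VB A \<inter> cylU A k (Rmap A X)"
  proof
    fix w assume "w \<in> Rmap A (Tstar A k X)"
    then obtain y where y: "y \<in> Tstar A k X" "w \<in> Rt A y" using Rmap_mem by blast
    obtain x where x: "x \<in> X" "(y,x) \<in> ST A k" using y(1) unfolding Tstar_def by blast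
    have yS: "y \<in> SB A" using y(1) unfolding Tstar_def by blast
    have wV: "w \<in> VB A" using yS y(2) VB_mem by blast
    have wU: "w \<in> U3 A" using y(2) Rt_U3 by blast
    obtain p where p: "trl A p" "fst (last p) = y" "w = (cls A (relab p 0), cls A (relab p 1), cls A (relab p 2))"
      using y(2) Rt_mem by blast
    have "\<exists>u\<in>Rmap A X. \<forall>l<3. l \<noteq> k \<longrightarrow> tr u l = tr w l"
    proof (cases "x = y")
      case True then show ?thesis using x y(2) Rmap_mem by blast
    next
      case False
      define p' where "p' = butlast p @ [(y,k),(x,0)]"
      have t1: "trl A (butlast p @ [(y,k)])" using trl_relab[OF p(1) k] p(2) unfolding relab_def by simp
      have xS: "x \<in> SB A" using x X by blast
      have t2: "trl A ((y,k) # [(x,0)])" using yS k False x(2) xS by auto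
      have tp': "trl A p'" unfolding p'_def using trl_join[OF t1 t2] by simp
      have lp': "fst (last p') = x" unfolding p'_def by simp
      define u where "u = (cls A (relab p' 0), cls A (relab p' 1), cls A (relab p' 2))"
      have uR: "u \<in> Rt A x" unfolding u_def using Rt_mem tp' lp' by blast
      have "tr u l = tr w l" if l: "l < 3" "l \<noteq> k" for l
      proof -
        have e1: "relab p' l = butlast p @ [(y,k),(x,l)]" unfolding p'_def relab_def by (simp add: butlast_append)
        have e2: "relab p l = butlast p @ [(y,l)]" unfolding relab_def using p(2) by simp
        have "trail_step A (butlast p @ [(y,k),(x,l)]) (butlast p @ [(y,l)])"
          by (rule ruleB) (use trl_relab[OF tp' l(1)] trl_relab[OF p(1) l(1)] e1 e2 l in \<open>simp_all add: is_trail_trl\<close>)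
        then have "cls A (relab p' l) = cls A (relab p l)" using cls_step e1 e2 by simp
        then show ?thesis unfolding u_def p(3) using tr_cls3[of l "\<lambda>i. cls A (relab p' i)"]
          tr_cls3[of l "\<lambda>i. cls A (relab p i)"] l by simp
      qed
      then show ?thesis using uR x(1) Rmap_mem by blast
    qed
    then show "w \<in> VB A \<inter> cylU A k (Rmap A X)" unfolding cylU_def using wV wU by blast
  qed
next
  assume X: "X \<subseteq> SB A" and k: "k < 3"
  show "VB A \<inter> cylU A k (Rmap A X) \<subseteq> Rmap A (Tstar A k X)"
  proof
    fix w assume w: "w \<in> VB A \<inter> cylU A k (Rmap A X)"
    obtain y where y: "y \<in> SB A" "w \<in> Rt A y" using w VB_mem by blast
    obtain u where u: "u \<in> Rmap A X" "\<forall>l<3. l \<noteq> k \<longrightarrow> tr u l = tr w l" using w unfolding cylU_def by blast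
    obtain x where x: "x \<in> X" "u \<in> Rt A x" using u(1) Rmap_mem by blast
    obtain p where p: "trl A p" "fst (last p) = y" "w = (cls A (relab p 0), cls A (relab p 1), cls A (relab p 2))"
      using y(2) Rt_mem by blast
    obtain q where q: "trl A q" "fst (last q) = x" "u = (cls A (relab q 0), cls A (relab q 1), cls A (relab q 2))"
      using x(2) Rt_mem by blast
    have e: "pt A (relab p l) = pt A (relab q l)" if l: "l < 3" "l \<noteq> k" for l
    proof -
      have "cls A (relab q l) = cls A (relab p l)" using u(2) l p(3) q(3)
        tr_cls3[of l "\<lambda>i. cls A (relab p i)"] tr_cls3[of l "\<lambda>i. cls A (relab q i)"] by simp
      then show ?thesis using cls_pt trl_relab p(1) q(1) l by metis
    qed
    obtain i j where ij: "i < 3" "j < 3" "i \<noteq> j" "i \<noteq> k" "j \<noteq> k" "3 - i - j = k" using other2[OF k] by blast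
    have "tr y k = tr x k" using N2[OF p(1) q(1) ij(1) ij(2) ij(3) e e] ij p(2) q(2) by simp
    moreover have "x \<in> SB A" using x X by blast
    ultimately have "(y,x) \<in> ST A k" unfolding ST_def using y(1) by simp
    then have "y \<in> Tstar A k X" unfolding Tstar_def using x(1) y(1) by blast
    then show "w \<in> Rmap A (Tstar A k X)" using y(2) Rmap_mem by blast
  qed
qed

lemma Rmap_diag: "k < 3 \<Longrightarrow> l < 3 \<Longrightarrow> Rmap A (SE A k l) = VB A \<inter> diagU A k l"
proof
  assume k: "k < 3" and l: "l < 3"
  show "Rmap A (SE A k l) \<subseteq> VB A \<inter> diagU A k l"
  proof
    fix w assume "w \<in> Rmap A (SE A k l)"
    then obtain t where t: "t \<in> SE A k l" "w \<in> Rt A t" using Rmap_mem by blast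
    have tS: "t \<in> SB A" using t(1) SE_SB by blast
    obtain p where p: "trl A p" "fst (last p) = t" "w = (cls A (relab p 0), cls A (relab p 1), cls A (relab p 2))"
      using t(2) Rt_mem by blast
    have "cls A (relab p k) = cls A (relab p l)"
    proof (cases "k = l")
      case True then show ?thesis by simp
    next
      case False
      have "trail_step A (butlast p @ [(t,k)]) (butlast p @ [(t,l)])"
        by (rule ruleC) (use trl_relab[OF p(1) k] trl_relab[OF p(1) l] p(2) t(1) in \<open>simp_all add: is_trail_trl relab_def\<close>)
      then show ?thesis using cls_step p(2) unfolding relab_def by simp
    qed
    then have "tr w k = tr w l" unfolding p(3) using tr_cls3[of k "\<lambda>i. cls A (relab p i)"]
      tr_cls3[of l "\<lambda>i. cls A (relab p i)"] k l by simp
    moreover have "w \<in> U3 A" using t(2) Rt_U3 by blast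
    moreover have "w \<in> VB A" using tS t(2) VB_mem by blast
    ultimately show "w \<in> VB A \<inter> diagU A k l" unfolding diagU_def by blast
  qed
next
  assume k: "k < 3" and l: "l < 3"
  show "VB A \<inter> diagU A k l \<subseteq> Rmap A (SE A k l)"
  proof
    fix w assume w: "w \<in> VB A \<inter> diagU A k l"
    obtain t where t: "t \<in> SB A" "w \<in> Rt A t" using w VB_mem by blast
    obtain p where p: "trl A p" "fst (last p) = t" "w = (cls A (relab p 0), cls A (relab p 1), cls A (relab p 2))"
      using t(2) Rt_mem by blast
    have "tr w k = tr w l" using w unfolding diagU_def by blast
    then have "cls A (relab p k) = cls A (relab p l)" unfolding p(3)
      using tr_cls3[of k "\<lambda>i. cls A (relab p i)"] tr_cls3[of l "\<lambda>i. cls A (relab p i)"] k l by simp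
    then have "pt A (relab p k) = pt A (relab p l)" using cls_pt trl_relab p(1) k l by metis
    then have "t \<in> SE A k l" using N3[OF p(1) k l] p(2) by simp
    then show "w \<in> Rmap A (SE A k l)" using t(2) Rmap_mem by blast
  qed
qed

lemma main: "cyl_iso (Rmap A) (Cm A) (Rc A)"
proof -
  have bij: "bij_betw (Rmap A) (Pow (SB A)) {X \<in> Cgen A. X \<subseteq> VB A}"
  proof (rule bij_betw_imageI)
    show "inj_on (Rmap A) (Pow (SB A))" unfolding inj_on_def using Rmap_inj by blast
    show "Rmap A ` Pow (SB A) = {X \<in> Cgen A. X \<subseteq> VB A}"
    proof
      show "Rmap A ` Pow (SB A) \<subseteq> {X \<in> Cgen A. X \<subseteq> VB A}" using Rmap_Cgen Rmap_VB by blast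
    next
      show "{X \<in> Cgen A. X \<subseteq> VB A} \<subseteq> Rmap A ` Pow (SB A)"
      proof
        fix Z assume "Z \<in> {X \<in> Cgen A. X \<subseteq> VB A}"
        then have "Z = Rmap A {t \<in> SB A. Rt A t \<subseteq> Z}" using Cgen_VB by blast
        then show "Z \<in> Rmap A ` Pow (SB A)" by blast
      qed
    qed
  qed
  have tstar: "Tstar A k X \<subseteq> SB A" for k X unfolding Tstar_def by blast
  have top: "Rmap A (SB A) = VB A" unfolding Rmap_def VB_def by simp
  have bot: "Rmap A {} = {}" unfolding Rmap_def by simp
  show ?thesis
    unfolding cyl_iso_def Cm_def Rc_def
    using bij Rmap_un Rmap_int Rmap_compl Rmap_cyl Rmap_diag top bot by simp
qed

end

theorem theorem4:
  fixes A :: "'a ra_sig"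
  assumes "WA A" and "atomic A"
  shows "cyl_iso (Rmap A) (Cm A) (Rc A)"
proof -
  interpret wal A using assms by unfold_locales
  show ?thesis by (rule main)
qed


end
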